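(* Let $\mathbf{X}$ and $\mathbf{Y}$ be Euclidean spaces, and let $G\colon \mathbf{X}\to\mathbb{R}^n$, $P\colon\mathbf{X}\to\mathbb{R}^m$ and $H\colon\mathbf{X}\to\mathbf{Y}$ be maps, and set \[ M = \{x \in \mathbf{X} : G(x)\le 0,\ P(x)\le 0,\ H(x)=0\}. \] Let $\bar x \in \mathbf{X}$ and suppose that $G$, $P$, $H$ are $C^2$-smooth around $\bar x$, that $G(\bar x)=0$, $P(\bar x)<0$, $H(\bar x)=0$, and that the linear independence constraint qualification holds: for $w \in \mathbb{R}^n$, $y \in \mathbf{Y}$, $\nabla G(\bar x)^* w + \nabla H(\bar x)^* y = 0$ implies $w=0$ and $y=0$. For points $z \in \mathbf{X}$ near $\bar x$, let $\Phi(z)$ denote the unique optimal solution of the convex quadratic program \[ \begin{array}{ll} \text{minimize} & \tfrac12 |x-z|^2\\ \text{subject to} & G(z)+\nabla G(z)(x-z)\le 0,\\ & P(z)+\nabla P(z)(x-z)\le 0,\\ & H(z)+\nabla H(z)(x-z)=0,\\ & x\in\mathbf{X}. \end{array} \] Then $\Phi$ is an inexact projection onto $M$ around $\bar x$; more precisely, the nearest point $P_M(z)$ is unique for $z$ near $\bar x$ and \[ |\Phi(z)-P_M(z)| = O\big(d_M(z)^2\big) \quad \text{as } z\to\bar x. \]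
   Context: Inequalities between vectors in $\mathbb{R}^n$ or $\mathbb{R}^m$ are componentwise. $\nabla G(z)$, $\nabla H(z)$, $\nabla P(z)$ denote derivative linear maps and ${}^*$ denotes adjoint. $d_M(z)=\min\{|x-z|: x\in M\}$ and $P_M(z)$ is the set of nearest points of $M$ to $z$. For a closed set $M$ and $\bar x\in M$, a map $\Phi$ is an inexact projection onto $M$ around $\bar x$ if $d_{P_M(z)}(\Phi(z)) = o(d_M(z))$ as $z\to\bar x$. *)

theory Defs
  imports "HOL-Analysis.Analysis" "HOL-Library.Landau_Symbols"
begin

definition C2_near :: "('a::euclidean_space \<Rightarrow> 'b::euclidean_space) \<Rightarrow> 'a \<Rightarrow> bool" where
  "C2_near f x0 \<longleftrightarrow> (\<exists>U. open U \<and> x0 \<in> U \<and>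
     (\<exists>(Df :: 'a \<Rightarrow> ('a \<Rightarrow>\<^sub>L 'b)) (D2f :: 'a \<Rightarrow> ('a \<Rightarrow>\<^sub>L ('a \<Rightarrow>\<^sub>L 'b))).
        (\<forall>x\<in>U. (f has_derivative blinfun_apply (Df x)) (at x) \<and>
                (Df has_derivative blinfun_apply (D2f x)) (at x)) \<and>
        continuous_on U D2f))"

definition constr_set ::
  "('a::euclidean_space \<Rightarrow> real^'n) \<Rightarrow> ('a \<Rightarrow> real^'m) \<Rightarrow> ('a \<Rightarrow> 'c::euclidean_space) \<Rightarrow> 'a set" where
  "constr_set G P H = {x. G x \<le> 0 \<and> P x \<le> 0 \<and> H x = 0}"

definition nearest_points :: "'a::metric_space set \<Rightarrow> 'a \<Rightarrow> 'a set" where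
  "nearest_points M z = {x\<in>M. \<forall>y\<in>M. dist z x \<le> dist z y}"

definition qp_feasible ::
  "('a::euclidean_space \<Rightarrow> real^'n) \<Rightarrow> ('a \<Rightarrow> real^'m) \<Rightarrow> ('a \<Rightarrow> 'c::euclidean_space) \<Rightarrow> 'a \<Rightarrow> 'a \<Rightarrow> bool" where
  "qp_feasible G P H z x \<longleftrightarrow>
     G z + frechet_derivative G (at z) (x - z) \<le> 0 \<and>
     P z + frechet_derivative P (at z) (x - z) \<le> 0 \<and>
     H z + frechet_derivative H (at z) (x - z) = 0"

definition qp_optimal ::
  "('a::euclidean_space \<Rightarrow> real^'n) \<Rightarrow> ('a \<Rightarrow> real^'m) \<Rightarrow> ('a \<Rightarrow> 'c::euclidean_space) \<Rightarrow> 'a \<Rightarrow> 'a \<Rightarrow> bool" where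
  "qp_optimal G P H z x \<longleftrightarrow> qp_feasible G P H z x \<and>
     (\<forall>x'. qp_feasible G P H z x' \<longrightarrow> (1/2) * norm (x - z)^2 \<le> (1/2) * norm (x' - z)^2)"

text \<open>Phi(z): the (unique, near the reference point) optimal solution of the QP.\<close>
definition qp_Phi ::
  "('a::euclidean_space \<Rightarrow> real^'n) \<Rightarrow> ('a \<Rightarrow> real^'m) \<Rightarrow> ('a \<Rightarrow> 'c::euclidean_space) \<Rightarrow> 'a \<Rightarrow> 'a" where
  "qp_Phi G P H z = (THE x. qp_optimal G P H z x)"

definition inexact_projection :: "('a::euclidean_space \<Rightarrow> 'a) \<Rightarrow> 'a set \<Rightarrow> 'a \<Rightarrow> bool" where
  "inexact_projection Phi M x0 \<longleftrightarrow>
     (\<lambda>z. infdist (Phi z) (nearest_points M z)) \<in> o[at x0](\<lambda>z. infdist z M)"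

end

theory Submission
  imports Defs
begin

lemma C2_lip:
  fixes f :: "'a::euclidean_space \<Rightarrow> 'b::euclidean_space"
  assumes "C2_near f x0"
  obtains r B Df where "r > 0" "B \<ge> 0"
    "\<And>x. x \<in> cball x0 r \<Longrightarrow> (f has_derivative blinfun_apply (Df x)) (at x)"
    "\<And>a b. a \<in> cball x0 r \<Longrightarrow> b \<in> cball x0 r \<Longrightarrow> norm (Df a - Df b) \<le> B * norm (a - b)"
proof -
  obtain U Df D2f where U: "open U" "x0 \<in> U"
    and d: "\<And>x. x\<in>U \<Longrightarrow> (f has_derivative blinfun_apply (Df x)) (at x) \<and>
                (Df has_derivative blinfun_apply (D2f x)) (at x)"
    and c: "continuous_on U D2f"
    using assms unfolding C2_near_def by blast
  obtain r where r: "r > 0" "cball x0 r \<subseteq> U"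
    using U open_contains_cball by blast
  have "compact (D2f ` cball x0 r)"
    by (rule compact_continuous_image[OF continuous_on_subset[OF c r(2)] compact_cball])
  then have "bounded (D2f ` cball x0 r)" by (rule compact_imp_bounded)
  then obtain B where B: "B > 0" "\<And>x. x \<in> cball x0 r \<Longrightarrow> norm (D2f x) \<le> B"
    unfolding bounded_pos by blast
  have lip: "norm (Df a - Df b) \<le> B * norm (a - b)" if "a \<in> cball x0 r" "b \<in> cball x0 r" for a b
  proof (rule differentiable_bound[OF convex_cball _ _ that])
    fix x assume x: "x \<in> cball x0 r"
    show "(Df has_derivative blinfun_apply (D2f x)) (at x within cball x0 r)"
      using d[of x] x r has_derivative_at_withinI by blast
    show "onorm (blinfun_apply (D2f x)) \<le> B"
      using B(2)[OF x] by (simp add: norm_blinfun.rep_eq)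
  qed
  have der: "(f has_derivative blinfun_apply (Df x)) (at x)" if "x \<in> cball x0 r" for x
    using d r that by blast
  show ?thesis
    using that[of r B Df, OF r(1) _ der lip] B by simp
qed

lemma taylor_lip:
  fixes f :: "'a::euclidean_space \<Rightarrow> 'b::euclidean_space"
  assumes der: "\<And>x. x \<in> cball x0 r \<Longrightarrow> (f has_derivative blinfun_apply (Df x)) (at x)"
    and lip: "\<And>a b. a \<in> cball x0 r \<Longrightarrow> b \<in> cball x0 r \<Longrightarrow> norm (Df a - Df b) \<le> B * norm (a - b)"
    and a: "a \<in> cball x0 r" and b: "b \<in> cball x0 r" and B: "B \<ge> 0"
  shows "norm (f b - f a - Df a (b - a)) \<le> B * norm (b - a)^2"
proof -
  have seg: "closed_segment a b \<subseteq> cball x0 r" using a b by (simp add: closed_segment_subset)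
  have "norm (f b - f a - blinfun_apply (Df a) (b - a)) \<le> norm (b - a) * (B * norm (b - a))"
  proof (rule differentiable_bound_linearization[where S = "closed_segment a b" and f' = "\<lambda>x. blinfun_apply (Df x)"])
    fix t :: real assume "t \<in> {0..1}"
    then show "a + t *\<^sub>R (b - a) \<in> closed_segment a b"
      unfolding closed_segment_def by (auto intro!: exI[of _ t] simp: algebra_simps)
  next
    fix x assume x: "x \<in> closed_segment a b"
    show "(f has_derivative blinfun_apply (Df x)) (at x within closed_segment a b)"
      using der seg x has_derivative_at_withinI by blast
    have "onorm (blinfun_apply (Df x) - blinfun_apply (Df a)) = norm (Df x - Df a)"
      by (simp add: norm_blinfun.rep_eq minus_blinfun.rep_eq fun_diff_def)
    also have "\<dots> \<le> B * norm (x - a)" using lip seg x a by blast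
    also have "\<dots> \<le> B * norm (b - a)" using segment_bound(1)[OF x] B by (simp add: mult_left_mono)
    finally show "onorm (blinfun_apply (Df x) - blinfun_apply (Df a)) \<le> B * norm (b - a)" .
  next
    show "a \<in> closed_segment a b" by simp
  qed
  then show ?thesis by (simp add: power2_eq_square algebra_simps)
qed

lemma solver_gen:
  fixes F :: "'a::euclidean_space \<Rightarrow> 'w::euclidean_space" and L0 :: "'a \<Rightarrow> 'w" and R :: "'w \<Rightarrow> 'a"
  assumes linR: "linear R" and LR: "\<And>w. L0 (R w) = w" and linL: "linear L0" and k: "\<kappa> > 0"
    and Rb: "\<And>w. norm (R w) \<le> \<kappa> * norm w"
    and est: "\<And>a b. a \<in> cball y0 \<rho> \<Longrightarrow> b \<in> cball y0 \<rho> \<Longrightarrow> norm (F a - F b - L0 (a - b)) \<le> norm (a - b) / (2*\<kappa>)"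
    and c: "2*\<kappa>*norm (c - F y0) \<le> \<rho>"
  shows "\<exists>y. F y = c \<and> norm (y - y0) \<le> 2*\<kappa>*norm (c - F y0)"
proof -
  define \<rho>' where "\<rho>' = 2*\<kappa>*norm (c - F y0)"
  define S where "S = cball y0 \<rho>' \<inter> (+) y0 ` range R"
  define T where "T = (\<lambda>y. y - R (F y - c))"
  have subR: "subspace (range R)" using linear_subspace_image[OF linR subspace_UNIV] .
  have "closed (range R)" by (rule closed_subspace[OF subR])
  then have "closed ((+) y0 ` range R)" by (rule closed_translation)
  then have clS: "closed S" unfolding S_def by (intro closed_Int closed_cball)
  have memS: "y \<in> S \<longleftrightarrow> norm (y - y0) \<le> \<rho>' \<and> (\<exists>u. y - y0 = R u)" for y
  proof -
    have "y \<in> (+) y0 ` range R \<longleftrightarrow> (\<exists>u. y - y0 = R u)"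
    proof
      assume "y \<in> (+) y0 ` range R"
      then obtain u where "y = y0 + R u" by auto
      then show "\<exists>u. y - y0 = R u" by auto
    next
      assume "\<exists>u. y - y0 = R u"
      then obtain u where "y - y0 = R u" by blast
      then have "y = y0 + R u" by (metis add_diff_cancel_left' diff_add_cancel add.commute)
      then show "y \<in> (+) y0 ` range R" by blast
    qed
    moreover have "y \<in> cball y0 \<rho>' \<longleftrightarrow> norm (y - y0) \<le> \<rho>'" by (simp add: dist_norm norm_minus_commute)
    ultimately show ?thesis unfolding S_def by blast
  qed
  have y0S: "y0 \<in> S" unfolding memS using linR \<rho>'_def k by (auto intro!: exI[of _ 0] simp: linear_0)
  have r\<rho>: "\<rho>' \<le> \<rho>" using c unfolding \<rho>'_def .
  have inc: "y \<in> cball y0 \<rho>" if "y \<in> S" for y using that r\<rho> unfolding memS by (simp add: dist_norm norm_minus_commute)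
  have lipT: "dist (T a) (T b) \<le> 1/2 * dist a b" if a: "a \<in> S" and b: "b \<in> S" for a b
  proof -
    obtain u1 u2 where u: "a - y0 = R u1" "b - y0 = R u2" using a b unfolding memS by blast
    have "a - b = (a - y0) - (b - y0)" by simp
    also have "\<dots> = R u1 - R u2" using u by simp
    also have "\<dots> = R (u1 - u2)" using linR by (simp add: linear_diff)
    finally have ab: "a - b = R (u1 - u2)" .
    have RL: "R (L0 (a - b)) = a - b" using ab LR by simp
    have e1: "R (F a - c) - R (F b - c) = R (F a - F b)"
      using linear_diff[OF linR, of "F a - c" "F b - c"] by simp
    have e2: "R (L0 (a - b)) - R (F a - F b) = - R (F a - F b - L0 (a - b))"
      using linear_diff[OF linR, of "F a - F b" "L0 (a - b)"] by simp
    have "T a - T b = (a - b) - (R (F a - c) - R (F b - c))" unfolding T_def by (simp add: algebra_simps)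
    also have "\<dots> = R (L0 (a - b)) - R (F a - F b)" unfolding e1 RL ..
    also have "\<dots> = - R (F a - F b - L0 (a - b))" by (rule e2)
    finally have "T a - T b = - R (F a - F b - L0 (a - b))" .
    then have "norm (T a - T b) \<le> \<kappa> * norm (F a - F b - L0 (a - b))" using Rb by simp
    also have "\<dots> \<le> \<kappa> * (norm (a - b) / (2*\<kappa>))" by (rule mult_left_mono[OF est[OF inc[OF a] inc[OF b]]]) (use k in simp)
    also have "\<dots> = 1/2 * norm (a - b)" using k by simp
    finally show ?thesis by (simp add: dist_norm)
  qed
  have selfT: "T ` S \<subseteq> S"
  proof
    fix z assume "z \<in> T ` S"
    then obtain y where y: "y \<in> S" "z = T y" by blast
    obtain u where u: "y - y0 = R u" using y(1) unfolding memS by blast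
    have "T y - y0 = (y - y0) - R (F y - c)" unfolding T_def by simp
    also have "\<dots> = R u - R (F y - c)" using u by simp
    also have "\<dots> = R (u - (F y - c))" using linR by (simp add: linear_diff)
    finally have Ty: "T y - y0 = R (u - (F y - c))" .
    have "norm (T y - y0) \<le> norm (T y - T y0) + norm (T y0 - y0)"
      by (metis diff_add_cancel norm_triangle_ineq add_diff_eq)
    also have "\<dots> \<le> 1/2 * norm (y - y0) + \<kappa> * norm (c - F y0)"
    proof -
      have "norm (T y - T y0) \<le> 1/2 * norm (y - y0)" using lipT[OF y(1) y0S] by (simp add: dist_norm)
      moreover have "norm (T y0 - y0) \<le> \<kappa> * norm (c - F y0)"
        unfolding T_def using Rb[of "F y0 - c"] by (simp add: norm_minus_commute)
      ultimately show ?thesis by simp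
    qed
    also have "\<dots> \<le> 1/2 * \<rho>' + \<kappa> * norm (c - F y0)" using y(1) unfolding memS by simp
    also have "\<dots> = \<rho>'" unfolding \<rho>'_def by simp
    finally show "z \<in> S" using y(2) Ty unfolding memS by blast
  qed
  have "complete S" using clS by (simp add: complete_eq_closed)
  then obtain y where y: "y \<in> S" "T y = y"
    using Banach_fix[of S "1/2" T] y0S selfT lipT by auto
  have "R (F y - c) = 0" using y(2) unfolding T_def by simp
  then have "F y - c = 0" using LR[of "F y - c"] linL by (metis linear_0)
  then show ?thesis using y(1) unfolding memS \<rho>'_def by auto
qed

lemma surj_from_adj:
  fixes f :: "'a::euclidean_space \<Rightarrow> 'c::euclidean_space" and g :: "'a \<Rightarrow> 'd::euclidean_space"
  assumes lf: "linear f" and lg: "linear g"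
    and adj: "\<forall>w y. adjoint f w + adjoint g y = 0 \<longrightarrow> w = 0 \<and> y = 0"
  shows "surj (\<lambda>x. (f x, g x))"
proof (rule ccontr)
  let ?L = "\<lambda>x. (f x, g x)"
  have lL: "linear ?L"
    by (intro linearI) (simp_all add: linear_add[OF lf] linear_add[OF lg] linear_scale[OF lf] linear_scale[OF lg])
  assume ns: "\<not> surj ?L"
  have sub: "subspace (range ?L)" using linear_subspace_image[OF lL subspace_UNIV] .
  have "span (range ?L) = range ?L" by (rule span_eq_iff[THEN iffD2, OF sub])
  moreover have "range ?L \<noteq> UNIV" using ns .
  ultimately have "span (range ?L) \<subset> span UNIV" unfolding span_UNIV by (metis psubsetI subset_UNIV)
  then obtain z where z: "z \<noteq> 0" "\<And>y. y \<in> span (range ?L) \<Longrightarrow> orthogonal z y"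
    using orthogonal_to_subspace_exists_gen by blast
  obtain w y where zw: "z = (w, y)" by (cases z)
  have o: "(w, y) \<bullet> (f x, g x) = 0" for x
    using z(2)[OF span_base[OF rangeI[of ?L x]]] zw unfolding orthogonal_def by simp
  define x where "x = adjoint f w + adjoint g y"
  have "x \<bullet> x = x \<bullet> (adjoint f w + adjoint g y)" by (simp add: x_def)
  also have "\<dots> = f x \<bullet> w + g x \<bullet> y"
    using adjoint_works[OF lf, of x w] adjoint_works[OF lg, of x y] by (simp add: inner_add_right)
  also have "\<dots> = 0" using o[of x] by (simp add: inner_commute)
  finally have "x = 0" by simp
  then have "w = 0 \<and> y = 0" using adj[rule_format, of w y] x_def by simp
  then show False using z(1) zw by (simp add: zero_prod_def)
qed

lemma norm_diff_sq: "norm (a - b)^2 = norm a^2 - 2*(a \<bullet> b) + norm (b::'a::real_inner)^2"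
  by (simp add: power2_norm_eq_inner inner_diff_left inner_diff_right inner_commute)

lemma inner_nonneg_nonpos:
  fixes l u :: "real^'n"
  assumes "\<forall>i. 0 \<le> l$i" "\<forall>i. u$i \<le> 0"
  shows "l \<bullet> u \<le> 0"
  unfolding inner_vec_def using assms by (auto intro!: sum_nonpos simp: mult_nonneg_nonpos)

lemma inner_compl_zero:
  fixes l u :: "real^'n"
  assumes "\<forall>i. l$i * u$i = 0"
  shows "l \<bullet> u = 0"
  unfolding inner_vec_def by (rule sum.neutral) (use assms in simp)

locale QPset =
  fixes G :: "'a::euclidean_space \<Rightarrow> real^'n"
    and P :: "'a \<Rightarrow> real^'m"
    and H :: "'a \<Rightarrow> 'b::euclidean_space"
    and xbar :: 'a
    and DG :: "'a \<Rightarrow> 'a \<Rightarrow> real^'n" and DP :: "'a \<Rightarrow> 'a \<Rightarrow> real^'m" and DH :: "'a \<Rightarrow> 'a \<Rightarrow> 'b"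
    and r B \<kappa> \<delta> :: real
  assumes rpos: "r > 0" and Bpos: "B > 0" and kpos: "\<kappa> > 0" and dpos: "\<delta> > 0"
    and dG: "\<And>x. x \<in> cball xbar r \<Longrightarrow> (G has_derivative DG x) (at x)"
    and dP: "\<And>x. x \<in> cball xbar r \<Longrightarrow> (P has_derivative DP x) (at x)"
    and dH: "\<And>x. x \<in> cball xbar r \<Longrightarrow> (H has_derivative DH x) (at x)"
    and tG: "\<And>a b. a \<in> cball xbar r \<Longrightarrow> b \<in> cball xbar r \<Longrightarrow> norm (G b - G a - DG a (b - a)) \<le> B * norm (b - a)^2"
    and tH: "\<And>a b. a \<in> cball xbar r \<Longrightarrow> b \<in> cball xbar r \<Longrightarrow> norm (H b - H a - DH a (b - a)) \<le> B * norm (b - a)^2"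
    and lG: "\<And>a b h. a \<in> cball xbar r \<Longrightarrow> b \<in> cball xbar r \<Longrightarrow> norm (DG a h - DG b h) \<le> B * norm (a - b) * norm h"
    and lH: "\<And>a b h. a \<in> cball xbar r \<Longrightarrow> b \<in> cball xbar r \<Longrightarrow> norm (DH a h - DH b h) \<le> B * norm (a - b) * norm h"
    and bG: "\<And>a h. a \<in> cball xbar r \<Longrightarrow> norm (DG a h) \<le> B * norm h"
    and bH: "\<And>a h. a \<in> cball xbar r \<Longrightarrow> norm (DH a h) \<le> B * norm h"
    and bP: "\<And>a h. a \<in> cball xbar r \<Longrightarrow> norm (DP a h) \<le> B * norm h"
    and Pneg: "\<And>x i. x \<in> cball xbar r \<Longrightarrow> P x $ i \<le> - \<delta>"
    and G0: "G xbar = 0" and H0: "H xbar = 0"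
    and rinv: "\<And>a u w. a \<in> cball xbar r \<Longrightarrow> \<exists>v. DG a v = u \<and> DH a v = w \<and> norm v \<le> \<kappa> * (norm u + norm w)"
    and solver: "\<And>y0 u c. norm (y0 - xbar) \<le> 3*r/4 \<Longrightarrow> \<kappa> * (norm (u - G y0) + norm (c - H y0)) \<le> r/8
       \<Longrightarrow> \<exists>y. G y = u \<and> H y = c \<and> norm (y - y0) \<le> \<kappa> * (norm (u - G y0) + norm (c - H y0))"
begin

abbreviation "M \<equiv> constr_set G P H"

lemma linDG: "x \<in> cball xbar r \<Longrightarrow> linear (DG x)"
  using dG has_derivative_linear by blast
lemma linDH: "x \<in> cball xbar r \<Longrightarrow> linear (DH x)"
  using dH has_derivative_linear by blast
lemma linDP: "x \<in> cball xbar r \<Longrightarrow> linear (DP x)"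
  using dP has_derivative_linear by blast

lemma kkt:
  assumes pn: "p \<in> nearest_points M z" and pb: "norm (p - xbar) \<le> r/2"
  shows "\<exists>l m. (\<forall>i. 0 \<le> l$i) \<and> (\<forall>i. l$i * G p $ i = 0) \<and> (\<forall>h. (z - p) \<bullet> h = l \<bullet> DG p h + m \<bullet> DH p h)"
proof (rule ccontr)
  assume nk: "\<not> ?thesis"
  have pc: "p \<in> cball xbar r" using pb rpos by (simp add: dist_norm norm_minus_commute)
  have pM: "p \<in> M" and pnear: "\<And>y. y \<in> M \<Longrightarrow> dist z p \<le> dist z y"
    using pn unfolding nearest_points_def by auto
  have Gp: "\<forall>i. G p $ i \<le> 0" and Hp: "H p = 0"
    using pM unfolding constr_set_def by (auto simp: less_eq_vec_def)
  note lG = linDG[OF pc] and lH = linDH[OF pc]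
  define T where "T = (\<lambda>x::(real^'n) \<times> 'b. adjoint (DG p) (fst x) + adjoint (DH p) (snd x))"
  define C where "C = {x::(real^'n) \<times> 'b. \<forall>i. 0 \<le> fst x $ i \<and> fst x $ i * G p $ i = 0}"
  have Tin: "h \<bullet> T (l, m) = l \<bullet> DG p h + m \<bullet> DH p h" for h l m
    unfolding T_def using adjoint_works[OF lG] adjoint_works[OF lH]
    by (simp add: inner_add_right inner_commute)
  have linT: "linear T"
    unfolding T_def
    by (intro linear_compose_add linear_compose[OF linear_fst, unfolded o_def]
        linear_compose[OF linear_snd, unfolded o_def] adjoint_linear lG lH)
  have injT: "inj T"
    unfolding linear_injective_0[OF linT]
  proof (intro allI impI)
    fix x assume T0: "T x = 0"
    obtain l m where x: "x = (l, m)" by (cases x)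
    obtain v where v: "DG p v = l" "DH p v = m" using rinv[OF pc] by blast
    have "0 = v \<bullet> T (l, m)" using T0 x by simp
    also have "\<dots> = l \<bullet> l + m \<bullet> m" using Tin v by simp
    finally have "l \<bullet> l + m \<bullet> m = 0" by simp
    then have "l = 0" "m = 0"
      by (metis add_nonneg_eq_0_iff inner_eq_zero_iff inner_ge_zero)+
    then show "x = 0" using x by (simp add: zero_prod_def)
  qed
  have closedC: "closed C"
    unfolding C_def
    by (intro closed_Collect_all closed_Collect_conj closed_Collect_le closed_Collect_eq
        continuous_intros)
  have convexC: "convex C"
    unfolding C_def convex_def
    by (auto simp: algebra_simps) (metis add.right_neutral mult_zero_right)
  have cl: "closed (T ` C)" by (rule closed_injective_linear_image[OF closedC linT injT])
  have cv: "convex (T ` C)" by (rule convex_linear_image[OF linT convexC])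
  have notin: "z - p \<notin> T ` C"
  proof
    assume "z - p \<in> T ` C"
    then obtain l m where lm: "(l, m) \<in> C" "z - p = T (l, m)" by auto
    have "\<forall>h. (z - p) \<bullet> h = l \<bullet> DG p h + m \<bullet> DH p h"
      using lm(2) Tin by (simp add: inner_commute)
    then show False using nk lm(1) unfolding C_def by auto
  qed
  obtain a b where ab: "a \<bullet> (z - p) < b" "\<And>x. x \<in> T ` C \<Longrightarrow> b < a \<bullet> x"
    using separating_hyperplane_closed_point[OF cv cl notin] by blast
  have "(0, 0) \<in> C" unfolding C_def by simp
  moreover have "T (0, 0) = 0" unfolding T_def using lG lH by (simp add: adjoint_linear linear_0)
  ultimately have b0: "b < 0" using ab(2)[of 0] by force
  define h where "h = - a"
  have cone: "h \<bullet> T x \<le> 0" if "x \<in> C" for x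
  proof (rule ccontr)
    assume "\<not> h \<bullet> T x \<le> 0"
    then have pos: "a \<bullet> T x < 0" unfolding h_def by simp
    define s where "s = b / (a \<bullet> T x)"
    have s: "s > 0" unfolding s_def using pos b0 by (simp add: divide_neg_neg)
    have "s *\<^sub>R x \<in> C" using that s unfolding C_def by auto
    then have "b < a \<bullet> T (s *\<^sub>R x)" using ab(2) by blast
    also have "T (s *\<^sub>R x) = s *\<^sub>R T x" using linT by (simp add: linear_scale)
    finally show False unfolding s_def using pos by simp
  qed
  have act: "DG p h $ i \<le> 0" if "G p $ i = 0" for i
  proof -
    have "(axis i 1, 0) \<in> C" unfolding C_def using that by (auto simp: axis_def)
    from cone[OF this] show ?thesis unfolding Tin by (simp add: inner_axis')
  qed
  have Hh: "DH p h = 0"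
  proof -
    have "(0, DH p h) \<in> C" unfolding C_def by simp
    from cone[OF this] have "DH p h \<bullet> DH p h \<le> 0" unfolding Tin by simp
    then show ?thesis by (metis inner_ge_zero inner_eq_zero_iff order_antisym)
  qed
  define \<beta> where "\<beta> = h \<bullet> (z - p)"
  have beta: "\<beta> > 0" unfolding \<beta>_def h_def using ab(1) b0 by simp
  define K where "K = 2 * \<kappa> * B * norm h ^ 2"
  define Q where "Q = 2 * norm (z - p) * K + (norm h + K)^2"
  have ev1: "\<forall>\<^sub>F t in at_right 0. \<forall>i. G p $ i + t * DG p h $ i \<le> 0"
  proof (rule eventually_all_finite)
    fix i
    show "\<forall>\<^sub>F t in at_right 0. G p $ i + t * DG p h $ i \<le> 0"
    proof (cases "G p $ i = 0")
      case True
      show ?thesis using act[OF True] eventually_at_right_less[of 0]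
        by (auto elim!: eventually_mono simp: True mult_nonneg_nonpos)
    next
      case False
      then have neg: "G p $ i < 0" using Gp by (simp add: order_less_le)
      have "((\<lambda>t. G p $ i + t * DG p h $ i) \<longlongrightarrow> G p $ i + 0 * DG p h $ i) (at_right 0)"
        by (intro tendsto_intros)
      then have "\<forall>\<^sub>F t in at_right 0. G p $ i + t * DG p h $ i < 0"
        using neg by (simp add: order_tendstoD(2))
      then show ?thesis by (auto elim!: eventually_mono)
    qed
  qed
  have ev2: "\<forall>\<^sub>F t in at_right 0. t * norm h \<le> r/4 \<and> \<kappa> * (2 * B * t^2 * norm h^2) \<le> r/8 \<and> t \<le> 1 \<and> t * Q < 2 * \<beta>"
  proof -
    have l1: "((\<lambda>t::real. t * norm h) \<longlongrightarrow> 0 * norm h) (at_right 0)" by (intro tendsto_intros)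
    have l2: "((\<lambda>t::real. \<kappa> * (2 * B * t^2 * norm h^2)) \<longlongrightarrow> \<kappa> * (2 * B * 0^2 * norm h^2)) (at_right 0)"
      by (intro tendsto_intros)
    have l3: "((\<lambda>t::real. t) \<longlongrightarrow> 0) (at_right 0)" by (intro tendsto_intros)
    have l4: "((\<lambda>t::real. t * Q) \<longlongrightarrow> 0 * Q) (at_right 0)" by (intro tendsto_intros)
    have e1: "\<forall>\<^sub>F t in at_right 0. t * norm h < r/4" using order_tendstoD(2)[OF l1, of "r/4"] rpos by simp
    have e2: "\<forall>\<^sub>F t in at_right 0. \<kappa> * (2 * B * t^2 * norm h^2) < r/8" using order_tendstoD(2)[OF l2, of "r/8"] rpos by simp
    have e3: "\<forall>\<^sub>F t in at_right (0::real). t < 1" using order_tendstoD(2)[OF l3, of 1] by simp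
    have e4: "\<forall>\<^sub>F t in at_right 0. t * Q < 2 * \<beta>" using order_tendstoD(2)[OF l4, of "2*\<beta>"] beta by simp
    show ?thesis using e1 e2 e3 e4 by eventually_elim auto
  qed
  have "\<forall>\<^sub>F t in at_right (0::real). False"
    using ev1 ev2 eventually_at_right_less[of "0::real"]
  proof eventually_elim
    case (elim t)
    then have t0: "t > 0" and tr: "t * norm h \<le> r/4" and tk: "\<kappa> * (2 * B * t^2 * norm h^2) \<le> r/8"
      and t1: "t \<le> 1" and tQ: "t * Q < 2 * \<beta>" and Gi: "\<forall>i. G p $ i + t * DG p h $ i \<le> 0" by auto
    define y0 where "y0 = p + t *\<^sub>R h"
    define u where "u = G p + t *\<^sub>R DG p h"
    have y0b: "norm (y0 - xbar) \<le> 3*r/4"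
    proof -
      have "norm (y0 - xbar) \<le> norm (p - xbar) + norm (t *\<^sub>R h)"
        unfolding y0_def by (metis add.commute add_diff_eq norm_triangle_ineq diff_add_eq)
      also have "\<dots> \<le> r/2 + r/4" using pb tr t0 by simp
      finally show ?thesis by simp
    qed
    have y0c: "y0 \<in> cball xbar r" using y0b rpos by (simp add: dist_norm norm_minus_commute)
    have DGth: "DG p (y0 - p) = t *\<^sub>R DG p h" unfolding y0_def using lG by (simp add: linear_scale)
    have DHth: "DH p (y0 - p) = 0" unfolding y0_def using lH Hh by (simp add: linear_scale)
    have ny: "norm (y0 - p) = t * norm h" unfolding y0_def using t0 by simp
    have e1: "norm (u - G y0) \<le> B * t^2 * norm h^2"
    proof -
      have "norm (u - G y0) = norm (G y0 - G p - DG p (y0 - p))"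
        unfolding u_def DGth by (simp add: norm_minus_commute algebra_simps)
      also have "\<dots> \<le> B * (t * norm h)^2" using tG[OF pc y0c] ny by simp
      finally show ?thesis by (simp add: power_mult_distrib)
    qed
    have e2: "norm (0 - H y0) \<le> B * t^2 * norm h^2"
    proof -
      have "norm (0 - H y0) = norm (H y0 - H p - DH p (y0 - p))"
        unfolding DHth Hp by simp
      also have "\<dots> \<le> B * (t * norm h)^2" using tH[OF pc y0c] ny by simp
      finally show ?thesis by (simp add: power_mult_distrib)
    qed
    have kb: "\<kappa> * (norm (u - G y0) + norm (0 - H y0)) \<le> \<kappa> * (2 * B * t^2 * norm h^2)"
      using e1 e2 kpos by (intro mult_left_mono) auto
    have "\<kappa> * (norm (u - G y0) + norm (0 - H y0)) \<le> \<kappa> * (2 * B * t^2 * norm h^2)" by (rule kb)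
    also have "\<dots> \<le> r/8" by (rule tk)
    finally have small: "\<kappa> * (norm (u - G y0) + norm (0 - H y0)) \<le> r/8" .
    obtain y where y: "G y = u" "H y = 0" "norm (y - y0) \<le> \<kappa> * (norm (u - G y0) + norm (0 - H y0))"
      using solver[OF y0b small] by blast
    have ey: "norm (y - y0) \<le> K * t^2"
    proof -
      have "norm (y - y0) \<le> \<kappa> * (2 * B * t^2 * norm h^2)"
        using y(3) kb by linarith
      then show ?thesis unfolding K_def by (simp add: algebra_simps)
    qed
    have yc: "y \<in> cball xbar r"
    proof -
      have "norm (y - xbar) \<le> norm (y - y0) + norm (y0 - xbar)"
        by (metis diff_add_cancel norm_triangle_ineq add_diff_eq)
      also have "\<dots> \<le> r/8 + 3*r/4" using y(3) small y0b by linarith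
      finally show ?thesis using rpos by (simp add: dist_norm norm_minus_commute)
    qed
    have yM: "y \<in> M"
      unfolding constr_set_def using y Gi Pneg[OF yc] dpos
      by (auto simp: less_eq_vec_def u_def intro: order_trans[of _ "-\<delta>"])
    have dz: "dist z p \<le> dist z y" using pnear[OF yM] .
    define e where "e = y - y0"
    have zy: "z - y = (z - p) - (t *\<^sub>R h + e)" unfolding e_def y0_def by simp
    have "norm (z - p)^2 \<le> norm (z - y)^2" using dz by (simp add: dist_norm)
    also have "\<dots> = norm (z - p)^2 - 2 * ((z - p) \<bullet> (t *\<^sub>R h + e)) + norm (t *\<^sub>R h + e)^2"
      unfolding zy by (rule norm_diff_sq)
    finally have ineq: "2 * ((z - p) \<bullet> (t *\<^sub>R h + e)) \<le> norm (t *\<^sub>R h + e)^2" by simp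
    have "(z - p) \<bullet> (t *\<^sub>R h + e) = t * \<beta> + (z - p) \<bullet> e"
      unfolding \<beta>_def by (simp add: inner_add_right inner_commute)
    moreover have "(z - p) \<bullet> e \<ge> - (norm (z - p) * (K * t^2))"
    proof -
      have "\<bar>(z - p) \<bullet> e\<bar> \<le> norm (z - p) * norm e" by (rule Cauchy_Schwarz_ineq2)
      also have "\<dots> \<le> norm (z - p) * (K * t^2)" using ey unfolding e_def by (simp add: mult_left_mono)
      finally show ?thesis by linarith
    qed
    moreover have "norm (t *\<^sub>R h + e) \<le> t * norm h + K * t^2"
      using norm_triangle_ineq[of "t *\<^sub>R h" e] ey t0 unfolding e_def by simp
    then have "norm (t *\<^sub>R h + e)^2 \<le> (t * norm h + K * t^2)^2"
      by (rule power_mono[OF _ norm_ge_zero])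
    ultimately have "2 * (t * \<beta>) \<le> 2 * norm (z - p) * (K * t^2) + (t * norm h + K * t^2)^2"
      using ineq by linarith
    moreover have "(t * norm h + K * t^2)^2 \<le> (t * norm h + K * t)^2"
    proof -
      have "K \<ge> 0" unfolding K_def using kpos Bpos by simp
      then have "K * t^2 \<le> K * t" using t0 t1 by (simp add: mult_left_mono power2_eq_square mult_le_cancel_left1)
      then show ?thesis using t0 \<open>K \<ge> 0\<close> by (intro power_mono) auto
    qed
    ultimately have "2 * (t * \<beta>) \<le> t * (t * Q)"
      unfolding Q_def by (simp add: power2_eq_square algebra_simps)
    then have "2 * \<beta> \<le> t * Q" using t0 by (simp add: mult_le_cancel_left_pos)
    then show False using tQ by simp
  qed
  then show False by simp
qed

end

context QPset begin

lemma xbarM: "xbar \<in> M"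
proof -
  have "xbar \<in> cball xbar r" using rpos by simp
  then have "\<forall>i. P xbar $ i \<le> 0" using Pneg dpos by (smt (verit))
  then show ?thesis unfolding constr_set_def using G0 H0 by (simp add: less_eq_vec_def)
qed

lemma cb: "norm (x - xbar) \<le> r \<Longrightarrow> x \<in> cball xbar r"
  by (simp add: dist_norm norm_minus_commute)

lemma mult_bound:
  assumes pc: "p \<in> cball xbar r" and l: "\<forall>h. (z - p) \<bullet> h = l \<bullet> DG p h + m \<bullet> DH p h"
  shows "norm l + norm m \<le> 2 * \<kappa> * norm (z - p)"
proof -
  obtain v where v: "DG p v = l" "DH p v = m" "norm v \<le> \<kappa> * (norm l + norm m)"
    using rinv[OF pc] by blast
  have "(norm l + norm m)^2 / 2 \<le> norm l ^2 + norm m ^2"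
    using zero_le_power2[of "norm l - norm m"] by (simp add: power2_eq_square field_simps)
  also have "\<dots> = (z - p) \<bullet> v" using l v by (simp add: power2_norm_eq_inner)
  also have "\<dots> \<le> norm (z - p) * norm v" by (rule norm_cauchy_schwarz)
  also have "\<dots> \<le> norm (z - p) * (\<kappa> * (norm l + norm m))" using v(3) by (simp add: mult_left_mono)
  finally have *: "(norm l + norm m)^2 / 2 \<le> norm (z - p) * (\<kappa> * (norm l + norm m))" .
  show ?thesis
  proof (cases "norm l + norm m = 0")
    case True then show ?thesis using kpos by simp
  next
    case False
    then have pos: "norm l + norm m > 0" by (simp add: add_pos_nonneg order_less_le)
    from * have "(norm l + norm m) * (norm l + norm m) \<le> (norm l + norm m) * (2 * \<kappa> * norm (z - p))"
      by (simp add: power2_eq_square algebra_simps)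
    then show ?thesis using pos by (simp add: mult_le_cancel_left_pos)
  qed
qed

lemma closedMc: "closed (M \<inter> cball xbar r)"
proof -
  have "continuous_on (cball xbar r) (\<lambda>x. (G x, P x, H x))"
    by (intro continuous_at_imp_continuous_on ballI continuous_Pair
        has_derivative_continuous[OF dG] has_derivative_continuous[OF dP] has_derivative_continuous[OF dH])
  then have "closed (cball xbar r \<inter> (\<lambda>x. (G x, P x, H x)) -` ({..0} \<times> {..0} \<times> {0}))"
    by (intro continuous_closed_preimage) (auto intro!: closed_Times)
  moreover have "cball xbar r \<inter> (\<lambda>x. (G x, P x, H x)) -` ({..0} \<times> {..0} \<times> {0}) = M \<inter> cball xbar r"
    unfolding constr_set_def by auto
  ultimately show ?thesis by simp
qed

lemma nearest_exists:
  assumes "norm (z - xbar) \<le> r/2"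
  shows "\<exists>p. p \<in> nearest_points M z"
proof -
  have ne: "M \<inter> cball xbar r \<noteq> {}" using xbarM rpos by auto
  obtain p where p: "p \<in> M \<inter> cball xbar r" "\<And>y. y \<in> M \<inter> cball xbar r \<Longrightarrow> dist z p \<le> dist z y"
    using distance_attains_inf[OF closedMc ne] by metis
  have "dist z p \<le> dist z y" if "y \<in> M" for y
  proof (cases "y \<in> cball xbar r")
    case True then show ?thesis using p that by auto
  next
    case False
    have "dist z p \<le> dist z xbar" using p(2)[of xbar] xbarM rpos by auto
    also have "\<dots> \<le> r/2" using assms by (simp add: dist_norm)
    also have "\<dots> \<le> dist z y"
      using False assms dist_triangle[of xbar y z] by (simp add: dist_norm norm_minus_commute dist_commute)
    finally show ?thesis .
  qed
  then show ?thesis using p(1) unfolding nearest_points_def by auto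
qed

lemma nearest_close:
  assumes "p \<in> nearest_points M z"
  shows "norm (z - p) \<le> norm (z - xbar)" "norm (p - xbar) \<le> 2 * norm (z - xbar)"
proof -
  show 1: "norm (z - p) \<le> norm (z - xbar)"
    using assms xbarM unfolding nearest_points_def by (auto simp: dist_norm)
  have "norm (p - xbar) \<le> norm (z - p) + norm (z - xbar)"
    using norm_triangle_ineq4[of "z - xbar" "z - p"] by (simp add: add.commute)
  then show "norm (p - xbar) \<le> 2 * norm (z - xbar)" using 1 by simp
qed

lemma hypo:
  assumes pn: "p \<in> nearest_points M z" and pb: "norm (p - xbar) \<le> r/2"
    and yM: "y \<in> M" and yc: "y \<in> cball xbar r"
  shows "(z - p) \<bullet> (y - p) \<le> 2 * \<kappa> * B * norm (z - p) * norm (y - p)^2"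
proof -
  have pc: "p \<in> cball xbar r" using pb rpos cb by simp
  obtain l m where lm: "\<forall>i. 0 \<le> l$i" "\<forall>i. l$i * G p $ i = 0" "\<forall>h. (z - p) \<bullet> h = l \<bullet> DG p h + m \<bullet> DH p h"
    using kkt[OF pn pb] by blast
  have pM: "p \<in> M" using pn unfolding nearest_points_def by auto
  have Gy: "\<forall>i. G y $ i \<le> 0" and Hy: "H y = 0" and Hp: "H p = 0"
    using yM pM unfolding constr_set_def by (auto simp: less_eq_vec_def)
  define E1 where "E1 = G y - G p - DG p (y - p)"
  define E2 where "E2 = H y - H p - DH p (y - p)"
  have E1b: "norm E1 \<le> B * norm (y - p)^2" unfolding E1_def using tG[OF pc yc] .
  have E2b: "norm E2 \<le> B * norm (y - p)^2" unfolding E2_def using tH[OF pc yc] .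
  have "(z - p) \<bullet> (y - p) = l \<bullet> (G y - G p - E1) + m \<bullet> (0 - E2)"
    using lm(3) unfolding E1_def E2_def Hy Hp by simp
  also have "\<dots> = l \<bullet> G y - l \<bullet> G p - l \<bullet> E1 - m \<bullet> E2"
    by (simp add: inner_diff_right)
  also have "\<dots> \<le> norm l * norm E1 + norm m * norm E2"
  proof -
    have "l \<bullet> G y \<le> 0" using inner_nonneg_nonpos lm(1) Gy by blast
    moreover have "l \<bullet> G p = 0" using inner_compl_zero lm(2) by blast
    moreover have "- (l \<bullet> E1) \<le> norm l * norm E1" using Cauchy_Schwarz_ineq2[of l E1] by linarith
    moreover have "- (m \<bullet> E2) \<le> norm m * norm E2" using Cauchy_Schwarz_ineq2[of m E2] by linarith
    ultimately show ?thesis by linarith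
  qed
  also have "\<dots> \<le> norm l * (B * norm (y - p)^2) + norm m * (B * norm (y - p)^2)"
    using E1b E2b by (intro add_mono mult_left_mono) auto
  also have "\<dots> = (norm l + norm m) * (B * norm (y - p)^2)" by (simp add: algebra_simps)
  also have "\<dots> \<le> (2 * \<kappa> * norm (z - p)) * (B * norm (y - p)^2)"
    using mult_bound[OF pc lm(3)] Bpos by (intro mult_right_mono) auto
  finally show ?thesis by (simp add: algebra_simps)
qed

lemma nearest_unique:
  assumes zb: "norm (z - xbar) \<le> r/4" and small: "4 * \<kappa> * B * norm (z - xbar) < 1"
    and p1: "p1 \<in> nearest_points M z" and p2: "p2 \<in> nearest_points M z"
  shows "p1 = p2"
proof -
  have b1: "norm (p1 - xbar) \<le> r/2" using nearest_close(2)[OF p1] zb by simp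
  have b2: "norm (p2 - xbar) \<le> r/2" using nearest_close(2)[OF p2] zb by simp
  have c1: "p1 \<in> cball xbar r" using b1 rpos cb by simp
  have c2: "p2 \<in> cball xbar r" using b2 rpos cb by simp
  have M1: "p1 \<in> M" and M2: "p2 \<in> M" using p1 p2 unfolding nearest_points_def by auto
  have h1: "(z - p1) \<bullet> (p2 - p1) \<le> 2 * \<kappa> * B * norm (z - xbar) * norm (p2 - p1)^2"
  proof -
    have "(z - p1) \<bullet> (p2 - p1) \<le> 2 * \<kappa> * B * norm (z - p1) * norm (p2 - p1)^2"
      by (rule hypo[OF p1 b1 M2 c2])
    also have "\<dots> \<le> 2 * \<kappa> * B * norm (z - xbar) * norm (p2 - p1)^2"
      using nearest_close(1)[OF p1] kpos Bpos by (intro mult_right_mono mult_left_mono) auto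
    finally show ?thesis .
  qed
  have h2: "(z - p2) \<bullet> (p1 - p2) \<le> 2 * \<kappa> * B * norm (z - xbar) * norm (p2 - p1)^2"
  proof -
    have "(z - p2) \<bullet> (p1 - p2) \<le> 2 * \<kappa> * B * norm (z - p2) * norm (p1 - p2)^2"
      by (rule hypo[OF p2 b2 M1 c1])
    also have "\<dots> \<le> 2 * \<kappa> * B * norm (z - xbar) * norm (p1 - p2)^2"
      using nearest_close(1)[OF p2] kpos Bpos by (intro mult_right_mono mult_left_mono) auto
    finally show ?thesis by (simp add: norm_minus_commute)
  qed
  have "norm (p2 - p1)^2 = (z - p1) \<bullet> (p2 - p1) + (z - p2) \<bullet> (p1 - p2)"
    by (simp add: power2_norm_eq_inner algebra_simps inner_diff_left inner_diff_right inner_commute)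
  also have "\<dots> \<le> (4 * \<kappa> * B * norm (z - xbar)) * norm (p2 - p1)^2" using h1 h2 by simp
  finally have "(1 - 4 * \<kappa> * B * norm (z - xbar)) * norm (p2 - p1)^2 \<le> 0" by (simp add: algebra_simps)
  then have "norm (p2 - p1)^2 \<le> 0" using small by (simp add: mult_le_0_iff)
  then show ?thesis by simp
qed

end

lemma small_t:
  fixes a s :: real
  assumes "\<And>t. 0 < t \<Longrightarrow> t \<le> 1 \<Longrightarrow> a \<le> t * s" "s \<ge> 0"
  shows "a \<le> 0"
proof (rule ccontr)
  assume "\<not> a \<le> 0"
  then have a: "a > 0" by simp
  define t where "t = min 1 (a / (s + 1))"
  have t: "0 < t" "t \<le> 1" unfolding t_def using a assms(2) by auto
  have "t * s \<le> (a / (s + 1)) * s" unfolding t_def using assms(2) by (intro mult_right_mono) auto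
  also have "\<dots> < a" using a assms(2) by (simp add: field_simps)
  finally show False using assms(1)[OF t] by simp
qed

lemma vec_comb_nonpos:
  fixes a b :: "real^'n"
  assumes "a \<le> 0" "b \<le> 0" "0 \<le> t" "t \<le> 1"
  shows "a + t *\<^sub>R (b - a) \<le> 0"
proof -
  have "a $ i + t * (b $ i - a $ i) \<le> 0" for i
  proof -
    have "a $ i \<le> 0" "b $ i \<le> 0" using assms(1,2) by (auto simp: less_eq_vec_def)
    then have "(1 - t) * a $ i + t * b $ i \<le> 0"
      using assms(3,4) by (intro add_nonpos_nonpos mult_nonneg_nonpos) auto
    then show ?thesis by (simp add: algebra_simps)
  qed
  then show ?thesis by (simp add: less_eq_vec_def)
qed

context QPset begin

definition Sz where "Sz z = {y. G z + DG z (y - z) \<le> 0 \<and> H z + DH z (y - z) = 0}"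

lemma Sz_closed:
  assumes zc: "z \<in> cball xbar r"
  shows "closed (Sz z)"
proof -
  have bl1: "bounded_linear (DG z)" using dG[OF zc] has_derivative_bounded_linear by blast
  have bl2: "bounded_linear (DH z)" using dH[OF zc] has_derivative_bounded_linear by blast
  have "continuous_on UNIV (\<lambda>y. (G z + DG z (y - z), H z + DH z (y - z)))"
    by (intro continuous_intros bounded_linear.continuous_on[OF bl1] bounded_linear.continuous_on[OF bl2])
  then have "closed (UNIV \<inter> (\<lambda>y. (G z + DG z (y - z), H z + DH z (y - z))) -` ({..0} \<times> {0}))"
    by (intro continuous_closed_preimage) (auto intro!: closed_Times)
  moreover have "UNIV \<inter> (\<lambda>y. (G z + DG z (y - z), H z + DH z (y - z))) -` ({..0} \<times> {0}) = Sz z"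
    unfolding Sz_def by auto
  ultimately show ?thesis by simp
qed

lemma Sz_conv:
  assumes zc: "z \<in> cball xbar r" and x: "x \<in> Sz z" and y: "y \<in> Sz z" and t: "0 \<le> t" "t \<le> 1"
  shows "x + t *\<^sub>R (y - x) \<in> Sz z"
proof -
  have l1: "linear (DG z)" using linDG[OF zc] .
  have l2: "linear (DH z)" using linDH[OF zc] .
  have e: "x + t *\<^sub>R (y - x) - z = (x - z) + t *\<^sub>R ((y - z) - (x - z))" by (simp add: algebra_simps)
  have "G z + DG z (x + t *\<^sub>R (y - x) - z) = (G z + DG z (x - z)) + t *\<^sub>R ((G z + DG z (y - z)) - (G z + DG z (x - z)))"
    unfolding e using l1 by (simp add: linear_add linear_diff linear_scale)
  also have "\<dots> \<le> 0" using x y t unfolding Sz_def by (intro vec_comb_nonpos) auto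
  finally have 1: "G z + DG z (x + t *\<^sub>R (y - x) - z) \<le> 0" .
  have "H z + DH z (x + t *\<^sub>R (y - x) - z) = (H z + DH z (x - z)) + t *\<^sub>R ((H z + DH z (y - z)) - (H z + DH z (x - z)))"
    unfolding e using l2 by (simp add: linear_add linear_diff linear_scale algebra_simps)
  also have "\<dots> = 0" using x y unfolding Sz_def by simp
  finally show ?thesis using 1 unfolding Sz_def by simp
qed

lemma VI:
  assumes zc: "z \<in> cball xbar r" and x: "x \<in> Sz z" and xmin: "\<And>y. y \<in> Sz z \<Longrightarrow> dist z x \<le> dist z y"
    and y: "y \<in> Sz z"
  shows "(z - x) \<bullet> (y - x) \<le> 0"
proof -
  have "2 * ((z - x) \<bullet> (y - x)) \<le> 0"
  proof (rule small_t)
    fix t :: real assume t: "0 < t" "t \<le> 1"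
    have "dist z x \<le> dist z (x + t *\<^sub>R (y - x))" using xmin Sz_conv[OF zc x y] t by simp
    then have "norm (z - x)^2 \<le> norm ((z - x) - t *\<^sub>R (y - x))^2"
      by (simp add: dist_norm algebra_simps)
    also have "\<dots> = norm (z - x)^2 - 2 * ((z - x) \<bullet> (t *\<^sub>R (y - x))) + norm (t *\<^sub>R (y - x))^2"
      by (rule norm_diff_sq)
    finally have *: "norm (z - x)^2 \<le> norm (z - x)^2 - 2 * ((z - x) \<bullet> (t *\<^sub>R (y - x))) + norm (t *\<^sub>R (y - x))^2" .
    have e1: "norm (t *\<^sub>R (y - x))^2 = t * (t * norm (y - x)^2)" using t by (simp add: power_mult_distrib power2_eq_square)
    have e2: "(z - x) \<bullet> (t *\<^sub>R (y - x)) = t * ((z - x) \<bullet> (y - x))" by simp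
    have "t * (2 * ((z - x) \<bullet> (y - x))) \<le> t * (t * norm (y - x)^2)"
      using * unfolding e1 e2 by (simp add: algebra_simps)
    then show "2 * ((z - x) \<bullet> (y - x)) \<le> t * norm (y - x)^2"
      using t(1) by (metis mult_le_cancel_left_pos)
  qed simp
  then show ?thesis by simp
qed

lemma feas_iff:
  assumes zc: "z \<in> cball xbar r"
  shows "qp_feasible G P H z y \<longleftrightarrow> y \<in> Sz z \<and> P z + DP z (y - z) \<le> 0"
proof -
  have "frechet_derivative G (at z) = DG z" using frechet_derivative_at[OF dG[OF zc]] by simp
  moreover have "frechet_derivative H (at z) = DH z" using frechet_derivative_at[OF dH[OF zc]] by simp
  moreover have "frechet_derivative P (at z) = DP z" using frechet_derivative_at[OF dP[OF zc]] by simp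
  ultimately show ?thesis unfolding qp_feasible_def Sz_def by auto
qed

lemma val_bound:
  assumes zb: "norm (z - xbar) \<le> min 1 r"
  shows "norm (G z) \<le> 2 * B * norm (z - xbar)" "norm (H z) \<le> 2 * B * norm (z - xbar)"
proof -
  have xc: "xbar \<in> cball xbar r" using rpos by simp
  have zc: "z \<in> cball xbar r" using zb cb by simp
  have n2: "norm (z - xbar)^2 \<le> norm (z - xbar)"
    using mult_left_mono[of "norm (z - xbar)" 1 "norm (z - xbar)"] zb by (simp add: power2_eq_square)
  have "norm (G z) \<le> norm (G z - G xbar - DG xbar (z - xbar)) + norm (DG xbar (z - xbar))"
    using G0 norm_triangle_ineq[of "G z - G xbar - DG xbar (z - xbar)" "DG xbar (z - xbar)"] by simp
  also have "\<dots> \<le> B * norm (z - xbar)^2 + B * norm (z - xbar)"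
    using tG[OF xc zc] bG[OF xc] by (intro add_mono) auto
  also have "\<dots> \<le> B * norm (z - xbar) + B * norm (z - xbar)"
    using n2 Bpos by (intro add_mono mult_left_mono) auto
  finally show "norm (G z) \<le> 2 * B * norm (z - xbar)" by simp
  have "norm (H z) \<le> norm (H z - H xbar - DH xbar (z - xbar)) + norm (DH xbar (z - xbar))"
    using H0 norm_triangle_ineq[of "H z - H xbar - DH xbar (z - xbar)" "DH xbar (z - xbar)"] by simp
  also have "\<dots> \<le> B * norm (z - xbar)^2 + B * norm (z - xbar)"
    using tH[OF xc zc] bH[OF xc] by (intro add_mono) auto
  also have "\<dots> \<le> B * norm (z - xbar) + B * norm (z - xbar)"
    using n2 Bpos by (intro add_mono mult_left_mono) auto
  finally show "norm (H z) \<le> 2 * B * norm (z - xbar)" by simp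
qed

lemma qp_main:
  assumes zb: "norm (z - xbar) \<le> min 1 r" and zd: "4 * \<kappa> * B * B * norm (z - xbar) \<le> \<delta>"
  shows "\<exists>x. x \<in> Sz z \<and> (\<forall>y\<in>Sz z. (z - x) \<bullet> (y - x) \<le> 0) \<and> (\<forall>x'. qp_optimal G P H z x' \<longleftrightarrow> x' = x)"
proof -
  have zc: "z \<in> cball xbar r" using zb cb by simp
  obtain v where v: "DG z v = - G z" "DH z v = - H z" "norm v \<le> \<kappa> * (norm (- G z) + norm (- H z))"
    using rinv[OF zc] by blast
  have vb: "norm v \<le> 4 * \<kappa> * B * norm (z - xbar)"
  proof -
    have "norm v \<le> \<kappa> * (2 * B * norm (z - xbar) + 2 * B * norm (z - xbar))"
      using v(3) val_bound[OF zb] kpos by (smt (verit, best) mult_left_mono norm_minus_cancel)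
    then show ?thesis by (simp add: algebra_simps)
  qed
  have zv: "z + v \<in> Sz z" unfolding Sz_def using v by simp
  then have ne: "Sz z \<noteq> {}" by auto
  obtain x where x: "x \<in> Sz z" and xmin: "\<And>y. y \<in> Sz z \<Longrightarrow> dist z x \<le> dist z y"
    using distance_attains_inf[OF Sz_closed[OF zc] ne] by metis
  have vi: "\<forall>y\<in>Sz z. (z - x) \<bullet> (y - x) \<le> 0" using VI[OF zc x xmin] by blast
  have xz: "norm (x - z) \<le> 4 * \<kappa> * B * norm (z - xbar)"
    using xmin[OF zv] vb by (simp add: dist_norm norm_minus_commute)
  have Pfeas: "P z + DP z (x - z) \<le> 0"
  proof -
    have "P z $ i + DP z (x - z) $ i \<le> 0" for i
    proof -
      have "DP z (x - z) $ i \<le> norm (DP z (x - z))"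
        using component_le_norm_cart[of "DP z (x - z)" i] by simp
      also have "\<dots> \<le> B * norm (x - z)" using bP[OF zc] by blast
      also have "\<dots> \<le> B * (4 * \<kappa> * B * norm (z - xbar))" using xz Bpos by (simp add: mult_left_mono)
      also have "\<dots> \<le> \<delta>" using zd by (simp add: algebra_simps)
      finally show ?thesis using Pneg[OF zc, of i] by simp
    qed
    then show ?thesis by (simp add: less_eq_vec_def)
  qed
  have xf: "qp_feasible G P H z x" using feas_iff[OF zc] x Pfeas by simp
  have xopt: "qp_optimal G P H z x"
    unfolding qp_optimal_def
  proof (intro conjI xf allI impI)
    fix x' assume "qp_feasible G P H z x'"
    then have "x' \<in> Sz z" using feas_iff[OF zc] by simp
    then have "norm (x - z) \<le> norm (x' - z)" using xmin by (simp add: dist_norm norm_minus_commute)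
    then show "1/2 * norm (x - z)^2 \<le> 1/2 * norm (x' - z)^2" by (simp add: power_mono)
  qed
  have uniq: "x' = x" if "qp_optimal G P H z x'" for x'
  proof -
    have x'f: "qp_feasible G P H z x'" and le: "1/2 * norm (x' - z)^2 \<le> 1/2 * norm (x - z)^2"
      using that xf unfolding qp_optimal_def by auto
    have x'S: "x' \<in> Sz z" using x'f feas_iff[OF zc] by simp
    have "norm (x' - z)^2 = norm ((x' - x) - (z - x))^2" by (simp add: algebra_simps)
    also have "\<dots> = norm (x' - x)^2 - 2 * ((x' - x) \<bullet> (z - x)) + norm (z - x)^2" by (rule norm_diff_sq)
    finally have "norm (x' - x)^2 \<le> 2 * ((x' - x) \<bullet> (z - x))"
      using le by (simp add: norm_minus_commute)
    also have "\<dots> \<le> 0" using vi x'S by (simp add: inner_commute)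
    finally show ?thesis by simp
  qed
  show ?thesis using x vi xopt uniq by blast
qed

lemma main_est:
  assumes zb: "norm (z - xbar) \<le> r/4" and pn: "p \<in> nearest_points M z"
    and x: "x \<in> Sz z" and vi: "\<forall>y\<in>Sz z. (z - x) \<bullet> (y - x) \<le> 0"
  shows "norm (x - p) \<le> 6 * \<kappa> * B * norm (z - p)^2"
proof -
  have zc: "z \<in> cball xbar r" using zb rpos cb by simp
  have pb: "norm (p - xbar) \<le> r/2" using nearest_close(2)[OF pn] zb by simp
  have pc: "p \<in> cball xbar r" using pb rpos cb by simp
  have pM: "p \<in> M" using pn unfolding nearest_points_def by auto
  have Gp: "G p \<le> 0" and Hp: "H p = 0" using pM unfolding constr_set_def by auto
  obtain l m where lm: "\<forall>i. 0 \<le> l$i" "\<forall>i. l$i * G p $ i = 0" "\<forall>h. (z - p) \<bullet> h = l \<bullet> DG p h + m \<bullet> DH p h"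
    using kkt[OF pn pb] by blast
  have lmb: "norm l + norm m \<le> 2 * \<kappa> * norm (z - p)" using mult_bound[OF pc lm(3)] .
  note l1 = linDG[OF zc] and l2 = linDH[OF zc]
  define d where "d = norm (z - p)"
  define r1 where "r1 = G z + DG z (p - z) - G p"
  define s1 where "s1 = H z + DH z (p - z)"
  have r1b: "norm r1 \<le> B * d^2" unfolding r1_def d_def
    using tG[OF zc pc] by (simp add: norm_minus_commute algebra_simps)
  have s1b: "norm s1 \<le> B * d^2"
  proof -
    have "H p - H z - DH z (p - z) = - s1" unfolding s1_def using Hp by simp
    then have "norm s1 = norm (H p - H z - DH z (p - z))" by (metis norm_minus_cancel)
    then show ?thesis unfolding d_def using tH[OF zc pc] by (simp add: norm_minus_commute)
  qed
  obtain v where v: "DG z v = r1" "DH z v = s1" "norm v \<le> \<kappa> * (norm r1 + norm s1)"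
    using rinv[OF zc] by blast
  have vb: "norm v \<le> 2 * \<kappa> * B * d^2"
  proof -
    have "norm v \<le> \<kappa> * (B * d^2 + B * d^2)" using v(3) r1b s1b kpos
      by (smt (verit, best) mult_left_mono)
    then show ?thesis by (simp add: algebra_simps)
  qed
  define q where "q = p - v"
  have qG: "G z + DG z (q - z) = G p"
  proof -
    have "q - z = (p - z) - v" unfolding q_def by simp
    then have "DG z (q - z) = DG z (p - z) - DG z v" using l1 by (simp add: linear_diff)
    then show ?thesis using v(1) unfolding r1_def by simp
  qed
  have qH: "H z + DH z (q - z) = 0"
  proof -
    have "q - z = (p - z) - v" unfolding q_def by simp
    then have "DH z (q - z) = DH z (p - z) - DH z v" using l2 by (simp add: linear_diff)
    then show ?thesis using v(2) unfolding s1_def by simp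
  qed
  have qS: "q \<in> Sz z" unfolding Sz_def using qG qH Gp by simp
  define nz where "nz = adjoint (DG z) l + adjoint (DH z) m"
  have nzi: "nz \<bullet> h = l \<bullet> DG z h + m \<bullet> DH z h" for h
    unfolding nz_def using adjoint_works[OF l1, of h l] adjoint_works[OF l2, of h m]
    by (simp add: inner_add_left inner_add_right inner_commute)
  have nzq: "nz \<bullet> (y - q) \<le> 0" if y: "y \<in> Sz z" for y
  proof -
    have a1: "DG z (y - q) = (G z + DG z (y - z)) - (G z + DG z (q - z))"
      using l1 by (simp add: linear_diff algebra_simps)
    have a2: "DH z (y - q) = (H z + DH z (y - z)) - (H z + DH z (q - z))"
      using l2 by (simp add: linear_diff algebra_simps)
    have e1: "DG z (y - q) = (G z + DG z (y - z)) - G p" using a1 qG by simp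
    have e2: "DH z (y - q) = 0" using a2 qH y unfolding Sz_def by simp
    have "nz \<bullet> (y - q) = l \<bullet> (G z + DG z (y - z)) - l \<bullet> G p"
      unfolding nzi e1 e2 by (simp add: inner_diff_right)
    also have "\<dots> \<le> 0"
    proof -
      have "l \<bullet> (G z + DG z (y - z)) \<le> 0"
        using inner_nonneg_nonpos[of l "G z + DG z (y - z)"] lm(1) y unfolding Sz_def
        by (auto simp: less_eq_vec_def)
      moreover have "l \<bullet> G p = 0" using inner_compl_zero lm(2) by blast
      ultimately show ?thesis by simp
    qed
    finally show ?thesis .
  qed
  define u where "u = nz - (z - p)"
  have ub: "norm u \<le> 2 * \<kappa> * B * d^2"
  proof -
    have "norm u ^2 = u \<bullet> u" by (simp add: power2_norm_eq_inner)
    also have "\<dots> = nz \<bullet> u - (z - p) \<bullet> u" by (metis u_def inner_diff_left)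
    also have "\<dots> = l \<bullet> (DG z u - DG p u) + m \<bullet> (DH z u - DH p u)"
      using nzi[of u] spec[OF lm(3), of u] by (simp add: inner_diff_right)
    also have "\<dots> \<le> norm l * (B * d * norm u) + norm m * (B * d * norm u)"
    proof -
      have "l \<bullet> (DG z u - DG p u) \<le> norm l * norm (DG z u - DG p u)" by (rule norm_cauchy_schwarz)
      also have "\<dots> \<le> norm l * (B * d * norm u)"
        using lG[OF zc pc, of u] unfolding d_def by (intro mult_left_mono) auto
      finally have 1: "l \<bullet> (DG z u - DG p u) \<le> norm l * (B * d * norm u)" .
      have "m \<bullet> (DH z u - DH p u) \<le> norm m * norm (DH z u - DH p u)" by (rule norm_cauchy_schwarz)
      also have "\<dots> \<le> norm m * (B * d * norm u)"
        using lH[OF zc pc, of u] unfolding d_def by (intro mult_left_mono) auto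
      finally have 2: "m \<bullet> (DH z u - DH p u) \<le> norm m * (B * d * norm u)" .
      show ?thesis using 1 2 by simp
    qed
    also have "\<dots> = ((norm l + norm m) * B * d) * norm u" by (simp add: algebra_simps)
    also have "\<dots> \<le> ((2 * \<kappa> * d) * B * d) * norm u"
      using lmb Bpos unfolding d_def by (intro mult_right_mono) auto
    finally have "norm u * norm u \<le> (2 * \<kappa> * B * d^2) * norm u"
      by (simp add: power2_eq_square algebra_simps)
    then show ?thesis
      by (cases "norm u = 0") (use kpos Bpos in \<open>auto simp: mult_le_cancel_right\<close>)
  qed
  have A1: "(z - x) \<bullet> (q - x) \<le> 0" using vi qS by blast
  have A2: "nz \<bullet> (x - q) \<le> 0" using nzq[OF x] .
  have "norm (q - x)^2 = (q - x) \<bullet> (q - x)" by (simp add: power2_norm_eq_inner)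
  also have "\<dots> = (z - x) \<bullet> (q - x) + nz \<bullet> (x - q) + (nz - (z - q)) \<bullet> (q - x)"
    by (simp add: inner_diff_left inner_diff_right algebra_simps inner_commute)
  also have "\<dots> \<le> (nz - (z - q)) \<bullet> (q - x)" using A1 A2 by simp
  also have "\<dots> \<le> norm (nz - (z - q)) * norm (q - x)" by (rule norm_cauchy_schwarz)
  finally have "norm (q - x) * norm (q - x) \<le> norm (nz - (z - q)) * norm (q - x)"
    by (simp add: power2_eq_square)
  then have qx: "norm (q - x) \<le> norm (nz - (z - q))"
    by (cases "norm (q - x) = 0") (auto simp: mult_le_cancel_right)
  have "nz - (z - q) = u - v" unfolding u_def q_def by simp
  then have "norm (nz - (z - q)) \<le> norm u + norm v" using norm_triangle_ineq4 by metis
  then have "norm (q - x) \<le> 4 * \<kappa> * B * d^2" using qx ub vb by simp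
  moreover have "norm (x - p) \<le> norm (x - q) + norm v"
  proof -
    have "x - p = (x - q) - v" unfolding q_def by simp
    then show ?thesis using norm_triangle_ineq4[of "x - q" v] by metis
  qed
  ultimately have "norm (x - p) \<le> 4 * \<kappa> * B * d^2 + 2 * \<kappa> * B * d^2"
    using vb norm_minus_commute[of x q] by linarith
  then show ?thesis unfolding d_def by (simp add: algebra_simps)
qed

end

context QPset begin

definition "eps = min (min 1 (r/4)) (min (\<delta> / (4 * \<kappa> * B * B)) (1 / (8 * \<kappa> * B)))"

lemma eps_pos: "eps > 0"
  unfolding eps_def using rpos dpos kpos Bpos by auto

lemma good:
  assumes zb: "norm (z - xbar) \<le> eps"
  shows "\<exists>p. nearest_points M z = {p} \<and> (\<exists>!x. qp_optimal G P H z x) \<and>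
    norm (qp_Phi G P H z - p) \<le> 6 * \<kappa> * B * (infdist z M)^2 \<and> infdist z M \<le> norm (z - xbar)"
proof -
  have z1: "norm (z - xbar) \<le> min 1 r" using zb rpos unfolding eps_def by auto
  have z2: "norm (z - xbar) \<le> r/4" using zb unfolding eps_def by auto
  have z3: "4 * \<kappa> * B * B * norm (z - xbar) \<le> \<delta>"
  proof -
    have "norm (z - xbar) \<le> \<delta> / (4 * \<kappa> * B * B)" using zb unfolding eps_def by auto
    then show ?thesis using kpos Bpos by (simp add: field_simps)
  qed
  have z4: "4 * \<kappa> * B * norm (z - xbar) < 1"
  proof -
    have "norm (z - xbar) \<le> 1 / (8 * \<kappa> * B)" using zb unfolding eps_def by auto
    then have "8 * \<kappa> * B * norm (z - xbar) \<le> 1" using kpos Bpos by (simp add: field_simps)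
    then show ?thesis by linarith
  qed
  obtain x where x: "x \<in> Sz z" "\<forall>y\<in>Sz z. (z - x) \<bullet> (y - x) \<le> 0" "\<forall>x'. qp_optimal G P H z x' \<longleftrightarrow> x' = x"
    using qp_main[OF z1 z3] by blast
  have ex1: "\<exists>!x. qp_optimal G P H z x" by (rule ex1I[of _ x]) (simp_all add: x(3))
  have phi: "qp_Phi G P H z = x" unfolding qp_Phi_def by (rule the1_equality[OF ex1]) (simp add: x(3))
  have z5: "norm (z - xbar) \<le> r/2" using z2 rpos by simp
  obtain p where pn: "p \<in> nearest_points M z" using nearest_exists[OF z5] by blast
  have single: "nearest_points M z = {p}"
    using nearest_unique[OF z2 z4 pn] pn by blast
  have pM: "p \<in> M" and pmin: "\<And>y. y \<in> M \<Longrightarrow> dist z p \<le> dist z y"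
    using pn unfolding nearest_points_def by auto
  have inf: "infdist z M = norm (z - p)"
  proof (rule antisym)
    show "infdist z M \<le> norm (z - p)" using infdist_le[OF pM, of z] by (simp add: dist_norm)
    have "M \<noteq> {}" using pM by auto
    then show "norm (z - p) \<le> infdist z M"
      unfolding infdist_def using pmin by (auto simp: dist_norm intro!: cINF_greatest)
  qed
  have est: "norm (x - p) \<le> 6 * \<kappa> * B * norm (z - p)^2" using main_est[OF z2 pn x(1) x(2)] .
  have a1: "norm (qp_Phi G P H z - p) \<le> 6 * \<kappa> * B * (infdist z M)^2" using est phi inf by simp
  have a2: "infdist z M \<le> norm (z - xbar)" using inf nearest_close(1)[OF pn] by simp
  show ?thesis using single ex1 a1 a2 by blast
qed

lemma conclusion:
  shows "(\<forall>\<^sub>F z in nhds xbar. \<exists>!x. qp_optimal G P H z x)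
    \<and> inexact_projection (qp_Phi G P H) M xbar
    \<and> (\<forall>\<^sub>F z in nhds xbar. \<exists>!p. p \<in> nearest_points M z)
    \<and> (\<lambda>z. norm (qp_Phi G P H z - (THE p. p \<in> nearest_points M z)))
         \<in> O[at xbar](\<lambda>z. (infdist z M)^2)"
proof -
  have evg: "\<forall>\<^sub>F z in nhds xbar. norm (z - xbar) \<le> e" if "e > 0" for e
    unfolding eventually_nhds_metric using that by (auto simp: dist_norm intro!: exI[of _ e])
  have evG: "\<forall>\<^sub>F z in nhds xbar. \<exists>p. nearest_points M z = {p} \<and> (\<exists>!x. qp_optimal G P H z x) \<and>
    norm (qp_Phi G P H z - p) \<le> 6 * \<kappa> * B * (infdist z M)^2 \<and> infdist z M \<le> norm (z - xbar)"
    using evg[OF eps_pos] by (rule eventually_mono) (rule good)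
  have 1: "\<forall>\<^sub>F z in nhds xbar. \<exists>!x. qp_optimal G P H z x"
    using evG by (rule eventually_mono) blast
  have 3: "\<forall>\<^sub>F z in nhds xbar. \<exists>!p. p \<in> nearest_points M z"
    using evG by (rule eventually_mono) (metis singletonD singletonI)
  have 4: "(\<lambda>z. norm (qp_Phi G P H z - (THE p. p \<in> nearest_points M z))) \<in> O[at xbar](\<lambda>z. (infdist z M)^2)"
  proof (rule bigoI)
    show "\<forall>\<^sub>F z in at xbar. norm (norm (qp_Phi G P H z - (THE p. p \<in> nearest_points M z))) \<le> (6 * \<kappa> * B) * norm ((infdist z M)^2)"
      using evG unfolding eventually_at_filter
    proof (rule eventually_mono)
      fix z assume "\<exists>p. nearest_points M z = {p} \<and> (\<exists>!x. qp_optimal G P H z x) \<and>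
        norm (qp_Phi G P H z - p) \<le> 6 * \<kappa> * B * (infdist z M)^2 \<and> infdist z M \<le> norm (z - xbar)"
      then obtain p where p: "nearest_points M z = {p}" "norm (qp_Phi G P H z - p) \<le> 6 * \<kappa> * B * (infdist z M)^2"
        by blast
      have "(THE p. p \<in> nearest_points M z) = p" unfolding p(1) by simp
      then show "z \<noteq> xbar \<longrightarrow> z \<in> UNIV \<longrightarrow> norm (norm (qp_Phi G P H z - (THE p. p \<in> nearest_points M z))) \<le> (6 * \<kappa> * B) * norm ((infdist z M)^2)"
        using p(2) by simp
    qed
  qed
  have 2: "inexact_projection (qp_Phi G P H) M xbar"
    unfolding inexact_projection_def
  proof (rule landau_o.smallI)
    fix c :: real assume c: "c > 0"
    define e where "e = min eps (c / (6 * \<kappa> * B))"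
    have e: "e > 0" unfolding e_def using eps_pos c kpos Bpos by auto
    have "\<forall>\<^sub>F z in nhds xbar. norm (infdist (qp_Phi G P H z) (nearest_points M z)) \<le> c * norm (infdist z M)"
      using evg[OF e]
    proof (rule eventually_mono)
      fix z assume zb: "norm (z - xbar) \<le> e"
      then have "norm (z - xbar) \<le> eps" unfolding e_def by auto
      from good[OF this] obtain p where p: "nearest_points M z = {p}"
        "norm (qp_Phi G P H z - p) \<le> 6 * \<kappa> * B * (infdist z M)^2" "infdist z M \<le> norm (z - xbar)"
        by blast
      have d0: "infdist z M \<ge> 0" by (rule infdist_nonneg)
      have "6 * \<kappa> * B * infdist z M \<le> 6 * \<kappa> * B * (c / (6 * \<kappa> * B))"
        using p(3) zb kpos Bpos unfolding e_def by (intro mult_left_mono) auto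
      also have "\<dots> = c" using kpos Bpos by simp
      finally have k: "6 * \<kappa> * B * infdist z M \<le> c" .
      have "infdist (qp_Phi G P H z) (nearest_points M z) = dist (qp_Phi G P H z) p" using p(1) by simp
      also have "\<dots> \<le> 6 * \<kappa> * B * (infdist z M)^2" using p(2) by (simp add: dist_norm)
      also have "\<dots> = (6 * \<kappa> * B * infdist z M) * infdist z M" by (simp add: power2_eq_square)
      also have "\<dots> \<le> c * infdist z M" using k d0 by (rule mult_right_mono)
      finally show "norm (infdist (qp_Phi G P H z) (nearest_points M z)) \<le> c * norm (infdist z M)"
        using d0 by (simp add: infdist_nonneg)
    qed
    then show "\<forall>\<^sub>F z in at xbar. norm (infdist (qp_Phi G P H z) (nearest_points M z)) \<le> c * norm (infdist z M)"
      unfolding eventually_at_filter by (rule eventually_mono) simp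
  qed
  show ?thesis using 1 2 3 4 by blast
qed

end

theorem mainTheorem2:
  fixes G :: "'a::euclidean_space \<Rightarrow> real^'n"
    and P :: "'a \<Rightarrow> real^'m"
    and H :: "'a \<Rightarrow> 'b::euclidean_space"
    and xbar :: 'a
  assumes "C2_near G xbar" and "C2_near P xbar" and "C2_near H xbar"
    and "G xbar = 0" and "\<forall>i. P xbar $ i < 0" and "H xbar = 0"
    and LICQ: "\<forall>w y. adjoint (frechet_derivative G (at xbar)) w
                     + adjoint (frechet_derivative H (at xbar)) y = 0 \<longrightarrow> w = 0 \<and> y = 0"
  shows "(\<forall>\<^sub>F z in nhds xbar. \<exists>!x. qp_optimal G P H z x)
    \<and> inexact_projection (qp_Phi G P H) (constr_set G P H) xbar
    \<and> (\<forall>\<^sub>F z in nhds xbar. \<exists>!p. p \<in> nearest_points (constr_set G P H) z)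
    \<and> (\<lambda>z. norm (qp_Phi G P H z - (THE p. p \<in> nearest_points (constr_set G P H) z)))
         \<in> O[at xbar](\<lambda>z. (infdist z (constr_set G P H))^2)"
proof -
  obtain rG BG DfG where G1: "rG > 0" "BG \<ge> 0"
    "\<And>x. x \<in> cball xbar rG \<Longrightarrow> (G has_derivative blinfun_apply (DfG x)) (at x)"
    "\<And>a b. a \<in> cball xbar rG \<Longrightarrow> b \<in> cball xbar rG \<Longrightarrow> norm (DfG a - DfG b) \<le> BG * norm (a - b)"
    using C2_lip[OF assms(1)] by blast
  obtain rP BP DfP where P1: "rP > 0" "BP \<ge> 0"
    "\<And>x. x \<in> cball xbar rP \<Longrightarrow> (P has_derivative blinfun_apply (DfP x)) (at x)"
    "\<And>a b. a \<in> cball xbar rP \<Longrightarrow> b \<in> cball xbar rP \<Longrightarrow> norm (DfP a - DfP b) \<le> BP * norm (a - b)"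
    using C2_lip[OF assms(2)] by blast
  obtain rH BH DfH where H1: "rH > 0" "BH \<ge> 0"
    "\<And>x. x \<in> cball xbar rH \<Longrightarrow> (H has_derivative blinfun_apply (DfH x)) (at x)"
    "\<And>a b. a \<in> cball xbar rH \<Longrightarrow> b \<in> cball xbar rH \<Longrightarrow> norm (DfH a - DfH b) \<le> BH * norm (a - b)"
    using C2_lip[OF assms(3)] by blast
  define r0 where "r0 = min rG (min rP rH)"
  have r0: "r0 > 0" unfolding r0_def using G1 P1 H1 by simp
  have sG: "cball xbar r0 \<subseteq> cball xbar rG" unfolding r0_def by (rule subset_cball) simp
  have sP: "cball xbar r0 \<subseteq> cball xbar rP" unfolding r0_def by (rule subset_cball) simp
  have sH: "cball xbar r0 \<subseteq> cball xbar rH" unfolding r0_def by (rule subset_cball) simp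
  define DG where "DG = (\<lambda>x. blinfun_apply (DfG x))"
  define DP where "DP = (\<lambda>x. blinfun_apply (DfP x))"
  define DH where "DH = (\<lambda>x. blinfun_apply (DfH x))"
  have xc0: "xbar \<in> cball xbar r0" using r0 by simp
  define NG where "NG = norm (DfG xbar) + BG * r0"
  define NP where "NP = norm (DfP xbar) + BP * r0"
  define NH where "NH = norm (DfH xbar) + BH * r0"
  have nG: "norm (DfG a) \<le> NG" if "a \<in> cball xbar r0" for a
  proof -
    have "norm (DfG a) \<le> norm (DfG xbar) + norm (DfG a - DfG xbar)" by (metis norm_triangle_sub add.commute)
    also have "norm (DfG a - DfG xbar) \<le> BG * r0"
    proof -
      have a1: "a \<in> cball xbar rG" "xbar \<in> cball xbar rG" using subsetD[OF sG that] subsetD[OF sG xc0] by auto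
      have "norm (DfG a - DfG xbar) \<le> BG * norm (a - xbar)" by (rule G1(4)[OF a1])
      also have "\<dots> \<le> BG * r0" using that G1(2) by (intro mult_left_mono) (auto simp: dist_norm norm_minus_commute)
      finally show ?thesis .
    qed
    finally show ?thesis unfolding NG_def by simp
  qed
  have nP: "norm (DfP a) \<le> NP" if "a \<in> cball xbar r0" for a
  proof -
    have "norm (DfP a) \<le> norm (DfP xbar) + norm (DfP a - DfP xbar)" by (metis norm_triangle_sub add.commute)
    also have "norm (DfP a - DfP xbar) \<le> BP * r0"
    proof -
      have a1: "a \<in> cball xbar rP" "xbar \<in> cball xbar rP" using subsetD[OF sP that] subsetD[OF sP xc0] by auto
      have "norm (DfP a - DfP xbar) \<le> BP * norm (a - xbar)" by (rule P1(4)[OF a1])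
      also have "\<dots> \<le> BP * r0" using that P1(2) by (intro mult_left_mono) (auto simp: dist_norm norm_minus_commute)
      finally show ?thesis .
    qed
    finally show ?thesis unfolding NP_def by simp
  qed
  have nH: "norm (DfH a) \<le> NH" if "a \<in> cball xbar r0" for a
  proof -
    have "norm (DfH a) \<le> norm (DfH xbar) + norm (DfH a - DfH xbar)" by (metis norm_triangle_sub add.commute)
    also have "norm (DfH a - DfH xbar) \<le> BH * r0"
    proof -
      have a1: "a \<in> cball xbar rH" "xbar \<in> cball xbar rH" using subsetD[OF sH that] subsetD[OF sH xc0] by auto
      have "norm (DfH a - DfH xbar) \<le> BH * norm (a - xbar)" by (rule H1(4)[OF a1])
      also have "\<dots> \<le> BH * r0" using that H1(2) by (intro mult_left_mono) (auto simp: dist_norm norm_minus_commute)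
      finally show ?thesis .
    qed
    finally show ?thesis unfolding NH_def by simp
  qed
  have NGp: "NG \<ge> 0" "NP \<ge> 0" "NH \<ge> 0" unfolding NG_def NP_def NH_def using G1 P1 H1 r0 by auto
  have DGx: "frechet_derivative G (at xbar) = DG xbar" unfolding DG_def
    using frechet_derivative_at[OF G1(3)] sG xc0 by (metis subsetD)
  have DHx: "frechet_derivative H (at xbar) = DH xbar" unfolding DH_def
    using frechet_derivative_at[OF H1(3)] sH xc0 by (metis subsetD)
  have linG: "linear (DG a)" for a unfolding DG_def by (rule bounded_linear.linear[OF blinfun.bounded_linear_right])
  have linH: "linear (DH a)" for a unfolding DH_def by (rule bounded_linear.linear[OF blinfun.bounded_linear_right])
  define L0 where "L0 = (\<lambda>x. (DG xbar x, DH xbar x))"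
  have linL0: "linear L0" unfolding L0_def
    by (intro linearI) (simp_all add: linear_add[OF linG] linear_add[OF linH] linear_scale[OF linG] linear_scale[OF linH])
  have "surj L0" unfolding L0_def
    by (rule surj_from_adj[OF linG linH]) (use LICQ DGx DHx in simp)
  then obtain R where linR: "linear R" and LR0: "L0 \<circ> R = id"
    using linear_surjective_right_inverse[OF linL0] by blast
  have LR: "L0 (R w) = w" for w using LR0 by (metis comp_apply id_apply)
  obtain \<kappa>0 where k0: "\<kappa>0 > 0" and Rb: "\<And>w. norm (R w) \<le> \<kappa>0 * norm w"
    using linear_bounded_pos[OF linR] by blast
  define \<delta>0 where "\<delta>0 = Min (range (\<lambda>i. - P xbar $ i))"
  have d0: "\<delta>0 > 0"
  proof -
    have "\<delta>0 \<in> range (\<lambda>i. - P xbar $ i)" unfolding \<delta>0_def by (intro Min_in) auto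
    then show ?thesis using assms(5) by auto
  qed
  have d0le: "P xbar $ i \<le> - \<delta>0" for i
  proof -
    have "\<delta>0 \<le> - P xbar $ i" unfolding \<delta>0_def by (intro Min_le) auto
    then show ?thesis by simp
  qed
  have contP: "(P \<longlongrightarrow> P xbar) (at xbar)"
    using has_derivative_continuous[OF P1(3)] sP xc0 by (metis subsetD isCont_def)
  have "\<forall>\<^sub>F x in at xbar. \<forall>i. P x $ i < - \<delta>0 / 2"
  proof (rule eventually_all_finite)
    fix i
    have "((\<lambda>x. P x $ i) \<longlongrightarrow> P xbar $ i) (at xbar)" by (rule tendsto_vec_nth[OF contP])
    moreover have "P xbar $ i < - \<delta>0 / 2" using d0le[of i] d0 by simp
    ultimately show "\<forall>\<^sub>F x in at xbar. P x $ i < - \<delta>0 / 2" by (rule order_tendstoD(2))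
  qed
  then obtain d1 where d1: "d1 > 0" "\<And>x. x \<noteq> xbar \<Longrightarrow> dist x xbar < d1 \<Longrightarrow> \<forall>i. P x $ i < - \<delta>0 / 2"
    unfolding eventually_at by auto
  define B where "B = BG + BH + BP + NG + NH + NP + 1"
  have Bp: "B > 0" and BGB: "BG \<le> B" and BHB: "BH \<le> B" and NGB: "NG \<le> B" and NHB: "NH \<le> B" and NPB: "NP \<le> B"
    unfolding B_def using G1 H1 P1 NGp by auto
  define r where "r = min (min r0 (d1/2)) (1 / (12 * B * \<kappa>0))"
  have rp: "r > 0" unfolding r_def using r0 d1 Bp k0 by auto
  have rr0: "cball xbar r \<subseteq> cball xbar r0" unfolding r_def by (intro subset_cball) auto
  have rB: "12 * B * \<kappa>0 * r \<le> 1"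
  proof -
    have "r \<le> 1 / (12 * B * \<kappa>0)" unfolding r_def by simp
    then show ?thesis using Bp k0 by (simp add: field_simps)
  qed
  have inG: "x \<in> cball xbar rG" and inH: "x \<in> cball xbar rH" and inP: "x \<in> cball xbar rP"
    and in0: "x \<in> cball xbar r0" if "x \<in> cball xbar r" for x
    using subsetD[OF rr0 that] sG sH sP by blast+
  have dG: "(G has_derivative DG x) (at x)" if "x \<in> cball xbar r" for x
    unfolding DG_def using G1(3)[OF inG[OF that]] .
  have dH: "(H has_derivative DH x) (at x)" if "x \<in> cball xbar r" for x
    unfolding DH_def using H1(3)[OF inH[OF that]] .
  have dP: "(P has_derivative DP x) (at x)" if "x \<in> cball xbar r" for x
    unfolding DP_def using P1(3)[OF inP[OF that]] .
  have tG: "norm (G b - G a - DG a (b - a)) \<le> B * norm (b - a)^2" if "a \<in> cball xbar r" "b \<in> cball xbar r" for a b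
  proof -
    have "norm (G b - G a - DG a (b - a)) \<le> BG * norm (b - a)^2" unfolding DG_def
      by (rule taylor_lip[OF G1(3) G1(4) inG[OF that(1)] inG[OF that(2)] G1(2)])
    also have "\<dots> \<le> B * norm (b - a)^2" using BGB by (simp add: mult_right_mono)
    finally show ?thesis .
  qed
  have tH: "norm (H b - H a - DH a (b - a)) \<le> B * norm (b - a)^2" if "a \<in> cball xbar r" "b \<in> cball xbar r" for a b
  proof -
    have "norm (H b - H a - DH a (b - a)) \<le> BH * norm (b - a)^2" unfolding DH_def
      by (rule taylor_lip[OF H1(3) H1(4) inH[OF that(1)] inH[OF that(2)] H1(2)])
    also have "\<dots> \<le> B * norm (b - a)^2" using BHB by (simp add: mult_right_mono)
    finally show ?thesis .
  qed
  have lG: "norm (DG a h - DG b h) \<le> B * norm (a - b) * norm h" if "a \<in> cball xbar r" "b \<in> cball xbar r" for a b h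
  proof -
    have "norm (DG a h - DG b h) = norm (blinfun_apply (DfG a - DfG b) h)" unfolding DG_def by (simp add: blinfun.diff_left)
    also have "\<dots> \<le> norm (DfG a - DfG b) * norm h" by (rule norm_blinfun)
    also have "\<dots> \<le> (BG * norm (a - b)) * norm h" using G1(4)[OF inG[OF that(1)] inG[OF that(2)]] by (simp add: mult_right_mono)
    also have "\<dots> \<le> B * norm (a - b) * norm h" using BGB by (simp add: mult_right_mono)
    finally show ?thesis .
  qed
  have lH: "norm (DH a h - DH b h) \<le> B * norm (a - b) * norm h" if "a \<in> cball xbar r" "b \<in> cball xbar r" for a b h
  proof -
    have "norm (DH a h - DH b h) = norm (blinfun_apply (DfH a - DfH b) h)" unfolding DH_def by (simp add: blinfun.diff_left)
    also have "\<dots> \<le> norm (DfH a - DfH b) * norm h" by (rule norm_blinfun)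
    also have "\<dots> \<le> (BH * norm (a - b)) * norm h" using H1(4)[OF inH[OF that(1)] inH[OF that(2)]] by (simp add: mult_right_mono)
    also have "\<dots> \<le> B * norm (a - b) * norm h" using BHB by (simp add: mult_right_mono)
    finally show ?thesis .
  qed
  have bG: "norm (DG a h) \<le> B * norm h" if "a \<in> cball xbar r" for a h
  proof -
    have "norm (DG a h) \<le> norm (DfG a) * norm h" unfolding DG_def by (rule norm_blinfun)
    also have "\<dots> \<le> B * norm h" using nG[OF in0[OF that]] NGB by (simp add: mult_right_mono)
    finally show ?thesis .
  qed
  have bH: "norm (DH a h) \<le> B * norm h" if "a \<in> cball xbar r" for a h
  proof -
    have "norm (DH a h) \<le> norm (DfH a) * norm h" unfolding DH_def by (rule norm_blinfun)
    also have "\<dots> \<le> B * norm h" using nH[OF in0[OF that]] NHB by (simp add: mult_right_mono)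
    finally show ?thesis .
  qed
  have bP: "norm (DP a h) \<le> B * norm h" if "a \<in> cball xbar r" for a h
  proof -
    have "norm (DP a h) \<le> norm (DfP a) * norm h" unfolding DP_def by (rule norm_blinfun)
    also have "\<dots> \<le> B * norm h" using nP[OF in0[OF that]] NPB by (simp add: mult_right_mono)
    finally show ?thesis .
  qed
  have Pneg: "P x $ i \<le> - (\<delta>0/2)" if "x \<in> cball xbar r" for x i
  proof (cases "x = xbar")
    case True then show ?thesis using d0le[of i] d0 by simp
  next
    case False
    have "dist x xbar \<le> r" using that by (simp add: dist_commute)
    also have "r < d1" unfolding r_def using d1 by linarith
    finally show ?thesis using d1(2)[OF False] by (simp add: less_imp_le)
  qed
  have xc: "xbar \<in> cball xbar r" using rp by simp
  have rinv: "\<exists>v. DG a v = u \<and> DH a v = w \<and> norm v \<le> (2*\<kappa>0) * (norm u + norm w)" if a: "a \<in> cball xbar r" for a u w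
  proof -
    define F where "F = (\<lambda>h. (DG a h, DH a h))"
    have ar: "norm (a - xbar) \<le> r" using a by (simp add: dist_norm norm_minus_commute)
    have est: "norm (F h1 - F h2 - L0 (h1 - h2)) \<le> norm (h1 - h2) / (2*\<kappa>0)" for h1 h2
    proof -
      have "F h1 - F h2 - L0 (h1 - h2) = (DG a (h1 - h2) - DG xbar (h1 - h2), DH a (h1 - h2) - DH xbar (h1 - h2))"
        unfolding F_def L0_def by (simp add: linear_diff[OF linG] linear_diff[OF linH])
      then have "norm (F h1 - F h2 - L0 (h1 - h2)) \<le> norm (DG a (h1 - h2) - DG xbar (h1 - h2)) + norm (DH a (h1 - h2) - DH xbar (h1 - h2))"
        by (simp add: norm_Pair_le)
      also have "\<dots> \<le> B * norm (a - xbar) * norm (h1 - h2) + B * norm (a - xbar) * norm (h1 - h2)"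
        by (intro add_mono lG[OF a xc] lH[OF a xc])
      also have "\<dots> \<le> B * r * norm (h1 - h2) + B * r * norm (h1 - h2)"
        using ar Bp by (intro add_mono mult_right_mono mult_left_mono) auto
      also have "\<dots> \<le> norm (h1 - h2) / (2*\<kappa>0)"
      proof -
        have "2 * B * r * (2 * \<kappa>0) \<le> 1" using rB Bp k0 rp by (simp add: algebra_simps)
        then have "2 * B * r \<le> 1 / (2*\<kappa>0)" using k0 by (simp add: field_simps)
        then have "(2 * B * r) * norm (h1 - h2) \<le> (1 / (2*\<kappa>0)) * norm (h1 - h2)" by (rule mult_right_mono) simp_all
        then show ?thesis by (simp add: algebra_simps)
      qed
      finally show ?thesis .
    qed
    obtain v where v: "F v = (u, w)" "norm (v - 0) \<le> 2*\<kappa>0*norm ((u,w) - F 0)"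
      using solver_gen[OF linR LR linL0 k0 Rb est order.refl] by blast
    have F0: "F 0 = 0" unfolding F_def using linG linH by (simp add: linear_0 zero_prod_def)
    have "norm v \<le> 2*\<kappa>0*norm (u,w)" using v(2) F0 by simp
    also have "\<dots> \<le> 2*\<kappa>0*(norm u + norm w)" using k0 norm_Pair_le[of u w] by (simp add: mult_left_mono)
    finally show ?thesis using v(1) unfolding F_def by auto
  qed
  have solver: "\<exists>y. G y = u \<and> H y = c \<and> norm (y - y0) \<le> (2*\<kappa>0) * (norm (u - G y0) + norm (c - H y0))"
    if y0: "norm (y0 - xbar) \<le> 3*r/4" and sm: "(2*\<kappa>0) * (norm (u - G y0) + norm (c - H y0)) \<le> r/8" for y0 u c
  proof -
    define F where "F = (\<lambda>y. (G y, H y))"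
    have cin: "y \<in> cball xbar r" if "y \<in> cball y0 (r/4)" for y
    proof -
      have "norm (y - xbar) \<le> norm (y - y0) + norm (y0 - xbar)"
        using norm_triangle_ineq[of "y - y0" "y0 - xbar"] by simp
      also have "\<dots> \<le> r/4 + 3*r/4" using that y0 by (intro add_mono) (auto simp: dist_norm norm_minus_commute)
      finally show ?thesis by (simp add: dist_norm norm_minus_commute)
    qed
    have est: "norm (F a - F b - L0 (a - b)) \<le> norm (a - b) / (2*\<kappa>0)" if "a \<in> cball y0 (r/4)" "b \<in> cball y0 (r/4)" for a b
    proof -
      have ac: "a \<in> cball xbar r" and bc: "b \<in> cball xbar r" using cin that by auto
      have an: "norm (a - xbar) \<le> r" and bn: "norm (b - xbar) \<le> r"
        using ac bc by (auto simp: dist_norm norm_minus_commute)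
      have ab: "norm (a - b) \<le> 2 * r"
      proof -
        have "norm (a - b) \<le> norm (a - xbar) + norm (b - xbar)"
          using norm_triangle_ineq4[of "a - xbar" "b - xbar"] by simp
        then show ?thesis using an bn by simp
      qed
      have sq: "norm (a - b)^2 \<le> 2 * r * norm (a - b)"
        using ab by (simp add: power2_eq_square mult_right_mono)
      have eG: "norm (G a - G b - DG xbar (a - b)) \<le> 3 * B * r * norm (a - b)"
      proof -
        have "G a - G b - DG xbar (a - b) = (G a - G b - DG b (a - b)) + (DG b (a - b) - DG xbar (a - b))" by simp
        then have "norm (G a - G b - DG xbar (a - b)) \<le> norm (G a - G b - DG b (a - b)) + norm (DG b (a - b) - DG xbar (a - b))"
          by (metis norm_triangle_ineq)
        also have "\<dots> \<le> B * norm (a - b)^2 + B * norm (b - xbar) * norm (a - b)"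
          by (intro add_mono tG[OF bc ac] lG[OF bc xc])
        also have "\<dots> \<le> B * (2 * r * norm (a - b)) + B * r * norm (a - b)"
          using sq bn Bp by (intro add_mono mult_left_mono mult_right_mono) auto
        finally show ?thesis by (simp add: algebra_simps)
      qed
      have eH: "norm (H a - H b - DH xbar (a - b)) \<le> 3 * B * r * norm (a - b)"
      proof -
        have "H a - H b - DH xbar (a - b) = (H a - H b - DH b (a - b)) + (DH b (a - b) - DH xbar (a - b))" by simp
        then have "norm (H a - H b - DH xbar (a - b)) \<le> norm (H a - H b - DH b (a - b)) + norm (DH b (a - b) - DH xbar (a - b))"
          by (metis norm_triangle_ineq)
        also have "\<dots> \<le> B * norm (a - b)^2 + B * norm (b - xbar) * norm (a - b)"
          by (intro add_mono tH[OF bc ac] lH[OF bc xc])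
        also have "\<dots> \<le> B * (2 * r * norm (a - b)) + B * r * norm (a - b)"
          using sq bn Bp by (intro add_mono mult_left_mono mult_right_mono) auto
        finally show ?thesis by (simp add: algebra_simps)
      qed
      have "norm (F a - F b - L0 (a - b)) \<le> norm (G a - G b - DG xbar (a - b)) + norm (H a - H b - DH xbar (a - b))"
        unfolding F_def L0_def using norm_Pair_le by simp
      also have "\<dots> \<le> 6 * B * r * norm (a - b)" using eG eH by simp
      also have "\<dots> \<le> norm (a - b) / (2*\<kappa>0)"
      proof -
        have "6 * B * r \<le> 1 / (2*\<kappa>0)" using rB k0 by (simp add: field_simps)
        then have "(6 * B * r) * norm (a - b) \<le> (1 / (2*\<kappa>0)) * norm (a - b)" by (rule mult_right_mono) simp_all
        then show ?thesis by (simp add: algebra_simps)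
      qed
      finally show ?thesis .
    qed
    have nc: "norm ((u, c) - F y0) \<le> norm (u - G y0) + norm (c - H y0)"
      unfolding F_def using norm_Pair_le by simp
    have cc: "2*\<kappa>0*norm ((u, c) - F y0) \<le> r/4"
    proof -
      have "2*\<kappa>0*norm ((u, c) - F y0) \<le> 2*\<kappa>0*(norm (u - G y0) + norm (c - H y0))"
        using nc k0 by (simp add: mult_left_mono)
      then show ?thesis using sm rp by simp
    qed
    obtain y where y: "F y = (u, c)" "norm (y - y0) \<le> 2*\<kappa>0*norm ((u, c) - F y0)"
      using solver_gen[OF linR LR linL0 k0 Rb est cc] by blast
    have "norm (y - y0) \<le> 2*\<kappa>0*(norm (u - G y0) + norm (c - H y0))"
      using y(2) nc k0 by (smt (verit) mult_left_mono)
    then show ?thesis using y(1) unfolding F_def by auto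
  qed
  interpret q: QPset G P H xbar DG DP DH r B "2*\<kappa>0" "\<delta>0/2"
  proof (unfold_locales)
    show "0 < r" by (rule rp)
    show "0 < B" by (rule Bp)
    show "0 < 2 * \<kappa>0" using k0 by simp
    show "0 < \<delta>0 / 2" using d0 by simp
  qed (auto intro: dG dP dH tG tH lG lH bG bH bP Pneg rinv solver simp: assms(4) assms(6))
  show ?thesis using q.conclusion by simp
qed

end
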